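(* Suppose $\|\widehat\theta_t-\theta^*\|_{\Sigma_t}\le\beta_t$ for all $t\in[T]$ (with $\|\theta^*\|_2\le L_\theta$), and let $\lambda\ge L_\varphi^2$. Then $\sum_{k=1}^{K_T}\sum_{t=t_k}^{t_{k+1}-1}B^{1,t_k}_{s_t,a_t}\le\beta_T\Big(\big(\tfrac{32\beta_T}{\kappa}+\tfrac{128\sqrt2L_\varphi\eta}{\kappa\sqrt\lambda}\big)d\log\big(1+\tfrac{T\mathcal UL_\varphi^2}{\lambda d}\big)+2\sqrt{dT\log\big(1+\tfrac{T\mathcal UL_\varphi^2}{\lambda d}\big)}\Big)$.
   Context: Setting: MNL model with finite $\mathcal S,\mathcal A$, reachable sets $\mathcal S_{s,a}$, $\mathcal U=\max|\mathcal S_{s,a}|$, features $\varphi$, $p(s'\mid s,a,\theta)=\exp(\varphi(s,a,s')^\top\theta)/\sum_{s''\in\mathcal S_{s,a}}\exp(\varphi(s,a,s'')^\top\theta)$, true $\theta^*$; assumptions (A1) $\|\varphi\|_2\le L_\varphi$, $\|\theta^*\|_2\le L_\theta$, $\Theta=\{\|\theta\|_2\le L_\theta\}$; (A2) $\inf_{\theta\in\Theta}p(s'\mid s_t,a_t,\theta)p(s''\mid s_t,a_t,\theta)\ge\kappa\in(0,1)$ for all $t$, $s',s''\in\mathcal S_{s_t,a_t}$; (A3) each $\mathcal S_{s,a}$ has $s'$ with $\varphi(s,a,s')=0$. The trajectory $(s_t,a_t)_{t\le T}$ is generated by \texttt{UCMNLK}, which uses the online estimator ($\ell_t(\theta)=-\sum_{s'\in\mathcal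 S_{s_t,a_t}}\mathbf1\{s_{t+1}=s'\}\log p(s'\mid s_t,a_t,\theta)$, $\widehat\theta_1=0$, $\Sigma_1=\lambda I_d$, $\widehat\Sigma_t=\Sigma_t+\eta\nabla^2\ell_t(\widehat\theta_t)$, $\widehat\theta_{t+1}=\arg\min_{\theta\in\Theta}\{\nabla\ell_t(\widehat\theta_t)^\top(\theta-\widehat\theta_t)+\frac1{2\eta}\|\theta-\widehat\theta_t\|^2_{\widehat\Sigma_t}\}$, $\Sigma_{t+1}=\Sigma_t+\nabla^2\ell_t(\widehat\theta_{t+1})$, step size $\eta>0$) and splits time into episodes $k=1,\dots,K_T$ starting at $t_k$ ($t_1=1$, $t_{K_T+1}=T+1$), where a new episode starts as soon as $\det\Sigma_t>2\det\Sigma_{t_k}$. $\beta_t>0$ is the confidence radius, nondecreasing in $t$. $B^{1,t}_{s,a}=\beta_t\sum_{s'\in\mathcal S_{s,a}}p(s'\mid s,a,\widehat\theta_t)\|\varphi(s,a,s')-\sum_{s''\in\mathcal S_{s,a}}p(s''\mid s,a,\widehat\theta_t)\varphi(s,a,s'')\|_{\Sigma_t^{-1}}$. *)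

theory Defs
  imports "HOL-Analysis.Analysis"
begin

text \<open>MNL transition model. R s a is the reachable set, phi the feature map,
  vectors live in real^'d with d = CARD('d).\<close>

definition mnl_prob ::
  "('s \<Rightarrow> 'a \<Rightarrow> 's set) \<Rightarrow> ('s \<Rightarrow> 'a \<Rightarrow> 's \<Rightarrow> real^'d) \<Rightarrow> real^'d \<Rightarrow> 's \<Rightarrow> 'a \<Rightarrow> 's \<Rightarrow> real" where
  "mnl_prob R \<phi> \<theta> s a s' =
     exp (\<phi> s a s' \<bullet> \<theta>) / (\<Sum>s''\<in>R s a. exp (\<phi> s a s'' \<bullet> \<theta>))"

definition mean_feat ::
  "('s \<Rightarrow> 'a \<Rightarrow> 's set) \<Rightarrow> ('s \<Rightarrow> 'a \<Rightarrow> 's \<Rightarrow> real^'d) \<Rightarrow> real^'d \<Rightarrow> 's \<Rightarrow> 'a \<Rightarrow> real^'d" where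
  "mean_feat R \<phi> \<theta> s a = (\<Sum>s'\<in>R s a. mnl_prob R \<phi> \<theta> s a s' *\<^sub>R \<phi> s a s')"

definition outer :: "real^'d \<Rightarrow> real^'d \<Rightarrow> real^'d^'d" where
  "outer x y = (\<chi> i j. x $ i * y $ j)"

text \<open>Gradient of the loss
  l(theta) = - sum_{s' in R s a} 1{s_next = s'} log p(s'|s,a,theta), for s_next in R s a:
  grad = E_p[phi] - phi(s,a,s_next).\<close>
definition mnl_grad ::
  "('s \<Rightarrow> 'a \<Rightarrow> 's set) \<Rightarrow> ('s \<Rightarrow> 'a \<Rightarrow> 's \<Rightarrow> real^'d) \<Rightarrow> real^'d \<Rightarrow> 's \<Rightarrow> 'a \<Rightarrow> 's \<Rightarrow> real^'d" where
  "mnl_grad R \<phi> \<theta> s a snext = mean_feat R \<phi> \<theta> s a - \<phi> s a snext"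

text \<open>Hessian of the same loss: E_p[phi phi^T] - E_p[phi] E_p[phi]^T.\<close>
definition mnl_hess ::
  "('s \<Rightarrow> 'a \<Rightarrow> 's set) \<Rightarrow> ('s \<Rightarrow> 'a \<Rightarrow> 's \<Rightarrow> real^'d) \<Rightarrow> real^'d \<Rightarrow> 's \<Rightarrow> 'a \<Rightarrow> real^'d^'d" where
  "mnl_hess R \<phi> \<theta> s a =
     (\<Sum>s'\<in>R s a. mnl_prob R \<phi> \<theta> s a s' *\<^sub>R outer (\<phi> s a s') (\<phi> s a s'))
     - outer (mean_feat R \<phi> \<theta> s a) (mean_feat R \<phi> \<theta> s a)"

definition wnorm :: "real^'d^'d \<Rightarrow> real^'d \<Rightarrow> real" where
  "wnorm M x = sqrt (x \<bullet> (M *v x))"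

definition omd_obj ::
  "('s \<Rightarrow> 'a \<Rightarrow> 's set) \<Rightarrow> ('s \<Rightarrow> 'a \<Rightarrow> 's \<Rightarrow> real^'d) \<Rightarrow> real \<Rightarrow> (nat \<Rightarrow> 's) \<Rightarrow> (nat \<Rightarrow> 'a)
    \<Rightarrow> (nat \<Rightarrow> real^'d) \<Rightarrow> (nat \<Rightarrow> real^'d^'d) \<Rightarrow> nat \<Rightarrow> real^'d \<Rightarrow> real" where
  "omd_obj R \<phi> \<eta> s a th Sig t \<theta> =
     mnl_grad R \<phi> (th t) (s t) (a t) (s (Suc t)) \<bullet> (\<theta> - th t)
     + 1 / (2 * \<eta>) * (wnorm (Sig t + \<eta> *\<^sub>R mnl_hess R \<phi> (th t) (s t) (a t)) (\<theta> - th t))\<^sup>2"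

definition next_start :: "(nat \<Rightarrow> real^'d^'d) \<Rightarrow> nat \<Rightarrow> nat \<Rightarrow> nat" where
  "next_start Sig T tk =
     (if \<exists>t. tk < t \<and> t \<le> T \<and> det (Sig t) > 2 * det (Sig tk)
      then (LEAST t. tk < t \<and> t \<le> T \<and> det (Sig t) > 2 * det (Sig tk))
      else T + 1)"

text \<open>t_k (k \<ge> 1), with t_1 = 1.\<close>
definition ep_start :: "(nat \<Rightarrow> real^'d^'d) \<Rightarrow> nat \<Rightarrow> nat \<Rightarrow> nat" where
  "ep_start Sig T k = (next_start Sig T ^^ (k - 1)) 1"

definition num_episodes :: "(nat \<Rightarrow> real^'d^'d) \<Rightarrow> nat \<Rightarrow> nat" where
  "num_episodes Sig T = card {k. 1 \<le> k \<and> ep_start Sig T k \<le> T}"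

definition bonus1 ::
  "('s \<Rightarrow> 'a \<Rightarrow> 's set) \<Rightarrow> ('s \<Rightarrow> 'a \<Rightarrow> 's \<Rightarrow> real^'d) \<Rightarrow> (nat \<Rightarrow> real)
    \<Rightarrow> (nat \<Rightarrow> real^'d) \<Rightarrow> (nat \<Rightarrow> real^'d^'d) \<Rightarrow> nat \<Rightarrow> 's \<Rightarrow> 'a \<Rightarrow> real" where
  "bonus1 R \<phi> \<beta> th Sig t x y =
     \<beta> t * (\<Sum>s'\<in>R x y. mnl_prob R \<phi> (th t) x y s' *
        wnorm (matrix_inv (Sig t)) (\<phi> x y s' - mean_feat R \<phi> (th t) x y))"

end

theory Submission
  imports Defs
begin

definition qf :: "real^'n^'n \<Rightarrow> real^'n \<Rightarrow> real" where
  "qf M x = x \<bullet> (M *v x)"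

definition symm :: "real^'n^'n \<Rightarrow> bool" where
  "symm M \<longleftrightarrow> transpose M = M"

lemma dot_mv_transpose: "x \<bullet> (M *v y) = (transpose M *v x) \<bullet> (y::real^'n)"
  by (metis dot_lmul_matrix transpose_matrix_vector inner_commute)

lemma dot_mv_symm: "symm M \<Longrightarrow> x \<bullet> (M *v y) = (M *v x) \<bullet> (y::real^'n)"
  by (metis dot_mv_transpose symm_def)

lemma dot_mv_symm': "symm M \<Longrightarrow> x \<bullet> (M *v y) = y \<bullet> (M *v (x::real^'n))"
  by (metis dot_mv_symm inner_commute)

lemma inv_props:
  fixes M :: "real^'n^'n"
  assumes "invertible M"
  shows "M ** matrix_inv M = mat 1" "matrix_inv M ** M = mat 1"
proof -
  have "\<exists>A'. M ** A' = mat 1 \<and> A' ** M = mat 1" using assms invertible_def by blast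
  then have "M ** matrix_inv M = mat 1 \<and> matrix_inv M ** M = mat 1"
    unfolding matrix_inv_def by (rule someI_ex)
  then show "M ** matrix_inv M = mat 1" "matrix_inv M ** M = mat 1" by auto
qed

lemma inv_mv:
  fixes M :: "real^'n^'n"
  assumes "invertible M"
  shows "M *v (matrix_inv M *v x) = x" "matrix_inv M *v (M *v x) = x"
  using inv_props[OF assms] by (simp_all add: matrix_vector_mul_assoc)

lemma inv_unique:
  fixes A B :: "real^'n^'n"
  assumes "A ** B = mat 1" "invertible A"
  shows "matrix_inv A = B"
proof -
  have "matrix_inv A = matrix_inv A ** (A ** B)" using assms by simp
  also have "\<dots> = B" using inv_props[OF assms(2)] by (simp add: matrix_mul_assoc)
  finally show ?thesis .
qed

lemma symm_inv:
  fixes M :: "real^'n^'n"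
  assumes "symm M" "invertible M"
  shows "symm (matrix_inv M)"
proof -
  have "transpose (matrix_inv M) ** M = mat 1"
    using inv_props(1)[OF assms(2)] assms(1) unfolding symm_def
    by (metis matrix_transpose_mul transpose_mat)
  then have "M ** transpose (matrix_inv M) = mat 1"
    using inv_props[OF assms(2)]
    by (metis matrix_mul_assoc matrix_mul_lid matrix_mul_rid)
  then show ?thesis unfolding symm_def using inv_unique[OF _ assms(2)] by metis
qed

definition pdc :: "real \<Rightarrow> real^'n^'n \<Rightarrow> bool" where
  "pdc c M \<longleftrightarrow> 0 < c \<and> symm M \<and> (\<forall>x. c * (x \<bullet> x) \<le> qf M x)"

lemma pdc_invertible:
  assumes "pdc c M" shows "invertible M"
proof -
  have "inj ((*v) M)"
  proof (rule injI)
    fix x y assume "M *v x = M *v y"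
    then have "M *v (x - y) = 0" by (simp add: matrix_vector_mult_diff_distrib)
    then have "qf M (x - y) = 0" by (simp add: qf_def)
    with assms have "c * ((x-y) \<bullet> (x-y)) \<le> 0" unfolding pdc_def by metis
    with assms have "(x-y) \<bullet> (x-y) \<le> 0" unfolding pdc_def
      by (simp add: mult_le_0_iff)
    then have "(x-y) \<bullet> (x-y) = 0" using inner_ge_zero[of "x-y"] by linarith
    then show "x = y" by simp
  qed
  then obtain B where "B ** M = mat 1" using matrix_left_invertible_injective by metis
  then show ?thesis using invertible_left_inverse by metis
qed

lemma qf_inv_eq:
  fixes M :: "real^'n^'n"
  assumes "symm M" "invertible M"
  shows "qf M (matrix_inv M *v x) = qf (matrix_inv M) x"
  unfolding qf_def inv_mv[OF assms(2)]
  by (metis assms(1) assms(2) dot_mv_symm' symm_inv inner_commute)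

lemma qf_inv_nonneg:
  assumes "pdc c M"
  shows "0 \<le> qf (matrix_inv M) x"
proof -
  have "c * ((matrix_inv M *v x) \<bullet> (matrix_inv M *v x)) \<le> qf M (matrix_inv M *v x)"
    using assms pdc_def by blast
  moreover have "0 \<le> c * ((matrix_inv M *v x) \<bullet> (matrix_inv M *v x))"
    using assms unfolding pdc_def by (simp add: zero_le_mult_iff)
  moreover have "qf M (matrix_inv M *v x) = qf (matrix_inv M) x"
    using qf_inv_eq[of M x] assms pdc_invertible[OF assms] unfolding pdc_def by blast
  ultimately show ?thesis by linarith
qed


lemma outer_mv: "outer u w *v y = (w \<bullet> y) *\<^sub>R (u::real^'n)"
  by (simp add: outer_def matrix_vector_mult_def vec_eq_iff inner_vec_def sum_distrib_left mult.commute mult.left_commute)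

lemma mat1_row: "(mat 1 :: real^'n^'n) $ i = (\<chi> j. if i = j then 1 else 0)"
  by (simp add: mat_def)

lemma det_aux_A:
  fixes u w :: "real^'n"
  assumes "finite J" "k \<notin> J"
  shows "det (\<chi> i. if i = k then w else if i \<in> J then (mat 1 :: real^'n^'n) $ i + u$i *s w else (mat 1 :: real^'n^'n) $ i) = w$k"
  using assms
proof (induction J rule: finite_induct)
  case empty
  let ?e = "\<lambda>i. (mat 1 :: real^'n^'n) $ i"
  define A :: "real^'n^'n" where "A = (\<chi> i. if i = k then (w$k) *s ?e k else ?e i)"
  have detA: "det A = w$k"
    by (subst det_diagonal) (auto simp: A_def mat_def prod.remove[of UNIV k])
  define x where "x = (\<Sum>j\<in>UNIV - {k}. (w$j) *s ?e j)"
  have xs: "x \<in> vec.span {row j A |j. j \<noteq> k}"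
    unfolding x_def
  proof (rule vec.span_sum)
    fix j assume "j \<in> UNIV - {k}"
    then have "?e j \<in> {row j A |j. j \<noteq> k}"
      by (auto simp: A_def row_def)
    then show "(w$j) *s ?e j \<in> vec.span {row j A |j. j \<noteq> k}"
      by (simp add: vec.span_base vec.span_scale)
  qed
  have wx: "w = (w$k) *s ?e k + x"
  proof -
    have "(\<Sum>j\<in>UNIV. (w$j) *s ?e j) $ i = w $ i" for i
    proof -
      have "(\<Sum>j\<in>UNIV. (w$j) *s ?e j) $ i = (\<Sum>j\<in>UNIV. if j = i then w$j else 0)"
        unfolding sum_component by (rule sum.cong) (auto simp: mat_def)
      then show ?thesis by simp
    qed
    then have "w = (\<Sum>j\<in>UNIV. (w$j) *s ?e j)"
      by (simp add: vec_eq_iff)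
    also have "\<dots> = (w$k) *s ?e k + x"
      unfolding x_def using sum.remove[of UNIV k "\<lambda>j. (w$j) *s ?e j"] by simp
    finally show ?thesis .
  qed
  have rowk: "row k A = (w$k) *s ?e k" by (simp add: A_def row_def vec_eq_iff)
  have rk: "row k A + x = w" by (subst rowk) (rule wx[symmetric])
  have eqm: "(\<chi> i. if i = k then w else if i \<in> {} then ?e i + u$i *s w else ?e i) = (\<chi> i. if i = k then row k A + x else row i A)"
    unfolding rk by (auto simp: A_def row_def vec_eq_iff)
  show ?case unfolding eqm det_row_span[OF xs] detA ..
next
  case (insert j J)
  let ?e = "\<lambda>i. (mat 1 :: real^'n^'n) $ i"
  let ?C = "\<lambda>i. if i = k then w else if i \<in> J then ?e i + u$i *s w else ?e i"
  have jk: "j \<noteq> k" using insert by auto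
  have eq: "(\<chi> i. if i = k then w else if i \<in> insert j J then ?e i + u$i *s w else ?e i)
      = (\<chi> i. if i = j then ?e j + u$j *s w else ?C i)"
    using jk insert by (auto simp: vec_eq_iff)
  have e1: "(\<chi> i. if i = j then ?e j else ?C i) = (\<chi> i. ?C i)"
    using insert jk by (auto simp: vec_eq_iff)
  have e2: "det (\<chi> i. if i = j then w else ?C i) = 0"
    by (rule det_identical_rows[OF jk]) (use jk in \<open>simp add: row_def vec_eq_iff\<close>)
  have a1: "det (\<chi> i. if i = j then ?e j + u$j *s w else ?C i) = det (\<chi> i. if i = j then ?e j else ?C i) + det (\<chi> i. if i = j then u$j *s w else ?C i)"
    by (rule det_row_add)
  have a2: "det (\<chi> i. if i = j then u$j *s w else ?C i) = u$j * det (\<chi> i. if i = j then w else ?C i)"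
    by (rule det_row_mul)
  have a3: "det (\<chi> i. ?C i) = w$k" using insert by simp
  show ?case
    unfolding eq a1 a2 e1 e2 a3 by simp
qed

lemma det_rank1:
  fixes u w :: "real^'n"
  shows "det (mat 1 + outer u w) = 1 + u \<bullet> w"
proof -
  let ?e = "\<lambda>i. (mat 1 :: real^'n^'n) $ i"
  have gen: "det (\<chi> i. if i \<in> J then ?e i + u$i *s w else ?e i) = 1 + (\<Sum>i\<in>J. u$i * w$i)"
    if "finite J" for J
    using that
  proof (induction J rule: finite_induct)
    case empty
    then show ?case by simp
  next
    case (insert k J)
    let ?C = "\<lambda>i. if i \<in> J then ?e i + u$i *s w else ?e i"
    have eq: "(\<chi> i. if i \<in> insert k J then ?e i + u$i *s w else ?e i)
        = (\<chi> i. if i = k then ?e k + u$k *s w else ?C i)"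
      using insert by (auto simp: vec_eq_iff)
    have e1: "(\<chi> i. if i = k then ?e k else ?C i) = (\<chi> i. ?C i)"
      using insert by (auto simp: vec_eq_iff)
    have e2: "(\<chi> i. if i = k then w else ?C i) = (\<chi> i. if i = k then w else if i \<in> J then ?e i + u$i *s w else ?e i)"
      by (auto simp: vec_eq_iff)
    have a1: "det (\<chi> i. if i = k then ?e k + u$k *s w else ?C i) = det (\<chi> i. if i = k then ?e k else ?C i) + det (\<chi> i. if i = k then u$k *s w else ?C i)"
      by (rule det_row_add)
    have a2: "det (\<chi> i. if i = k then u$k *s w else ?C i) = u$k * det (\<chi> i. if i = k then w else ?C i)"
      by (rule det_row_mul)
    have a3: "det (\<chi> i. ?C i) = 1 + (\<Sum>i\<in>J. u$i * w$i)" using insert by simp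
    have a4: "det (\<chi> i. if i = k then w else if i \<in> J then ?e i + u$i *s w else ?e i) = w$k"
      using det_aux_A[OF insert(1,2), of w u] .
    show ?case
      unfolding eq a1 a2 e1 a3 a4 using insert by (simp add: algebra_simps)
  qed
  have "mat 1 + outer u w = (\<chi> i. if i \<in> UNIV then ?e i + u$i *s w else ?e i)"
    by (simp add: vec_eq_iff outer_def mat_def)
  then show ?thesis using gen[of UNIV] by (simp add: inner_vec_def mult.commute)
qed


lemma qf_scale: "qf M (c *\<^sub>R x) = c^2 * qf M x"
  by (simp add: qf_def matrix_vector_mult_scaleR power2_eq_square)

lemma qf_diff_symm:
  assumes "symm M"
  shows "qf M (y - z) = qf M y - 2 * (y \<bullet> (M *v z)) + qf M z"
proof -
  have "z \<bullet> (M *v y) = y \<bullet> (M *v z)" using dot_mv_symm'[OF assms] by metis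
  then show ?thesis
    by (simp add: qf_def matrix_vector_mult_diff_distrib inner_diff_left inner_diff_right)
qed

lemma qf_add_mat: "qf (A + B) x = qf A x + qf B x"
  by (simp add: qf_def matrix_vector_mult_add_rdistrib inner_add_right)

lemma qf_outer: "qf (outer v v) y = (v \<bullet> y)^2"
  by (simp add: qf_def outer_mv power2_eq_square inner_commute)

lemma qf_sum_mat: "qf (\<Sum>j\<in>J. A j) x = (\<Sum>j\<in>J. qf (A j) x)"
proof (induction J rule: infinite_finite_induct)
  case (infinite A) then show ?case by (simp add: qf_def)
next
  case empty then show ?case by (simp add: qf_def)
next
  case (insert j J) then show ?case by (simp add: qf_add_mat)
qed

lemma symm_outer: "symm (outer v v)"
  by (simp add: symm_def outer_def transpose_def vec_eq_iff mult.commute)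

lemma symm_add: "symm A \<Longrightarrow> symm B \<Longrightarrow> symm (A + B)"
  by (simp add: symm_def transpose_def vec_eq_iff)

lemma symm_sum: "(\<And>j. j \<in> J \<Longrightarrow> symm (A j)) \<Longrightarrow> symm (\<Sum>j\<in>J. A j)"
proof (induction J rule: infinite_finite_induct)
  case (infinite A) then show ?case by (simp add: symm_def transpose_def vec_eq_iff)
next
  case empty then show ?case by (simp add: symm_def transpose_def vec_eq_iff)
next
  case (insert j J) then show ?case by (simp add: symm_add)
qed

lemma cs_psd:
  fixes M :: "real^'n^'n"
  assumes "symm M" "\<And>z. 0 \<le> qf M z"
  shows "(x \<bullet> (M *v y))^2 \<le> qf M x * qf M y"
proof -
  let ?A = "qf M x" and ?B = "x \<bullet> (M *v y)" and ?C = "qf M y"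
  have sw: "y \<bullet> (M *v x) = ?B" using dot_mv_symm'[OF assms(1)] by metis
  have key: "0 \<le> qf M (a *\<^sub>R x - b *\<^sub>R y)" for a b using assms(2) by blast
  have exp: "qf M (a *\<^sub>R x - b *\<^sub>R y) = a^2 * ?A - 2*a*b*?B + b^2 * ?C" for a b
    using sw by (simp add: qf_def matrix_vector_mult_diff_distrib matrix_vector_mult_scaleR
        inner_diff_left inner_diff_right power2_eq_square algebra_simps)
  show ?thesis
  proof (cases "?C = 0")
    case True
    have t: "0 \<le> ?A - 2*t*?B" for t using key[of 1 t] exp[of 1 t] True by simp
    have "?B = 0"
    proof (rule ccontr)
      assume nz: "?B \<noteq> 0"
      have "0 \<le> ?A - 2*((?A + 1) / (2 * ?B))*?B" by (rule t)
      also have "2*((?A + 1) / (2 * ?B))*?B = ?A + 1" using nz by (simp add: field_simps)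
      finally show False by simp
    qed
    then show ?thesis using True by simp
  next
    case False
    then have Cp: "?C > 0" using assms(2)[of y] by simp
    have "0 \<le> ?C^2 * ?A - 2*?C*?B*?B + ?B^2 * ?C" using key[of ?C ?B] exp[of ?C ?B] by simp
    then have "0 \<le> ?C * (?C * ?A - ?B^2)" by (simp add: power2_eq_square algebra_simps)
    then have "0 \<le> ?C * ?A - ?B^2" using Cp by (simp add: zero_le_mult_iff)
    then show ?thesis by (simp add: mult.commute)
  qed
qed

lemma pdc_psd: "pdc c M \<Longrightarrow> 0 \<le> qf M z"
proof -
  assume a: "pdc c M"
  then have "c * (z \<bullet> z) \<le> qf M z" "0 < c" unfolding pdc_def by auto
  moreover have "0 \<le> c * (z \<bullet> z)" using \<open>0 < c\<close> by simp
  ultimately show ?thesis by linarith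
qed

lemma cs_inv:
  assumes "pdc c S"
  shows "(w \<bullet> y)^2 \<le> qf (matrix_inv S) w * qf S y"
proof -
  have inv: "invertible S" using pdc_invertible[OF assms] .
  have sy: "symm S" using assms pdc_def by blast
  have "((matrix_inv S *v w) \<bullet> (S *v y))^2 \<le> qf S (matrix_inv S *v w) * qf S y"
    by (rule cs_psd[OF sy pdc_psd[OF assms]])
  moreover have "(matrix_inv S *v w) \<bullet> (S *v y) = w \<bullet> y"
    using dot_mv_symm[OF sy, of "matrix_inv S *v w" y] inv_mv[OF inv] by simp
  ultimately show ?thesis using qf_inv_eq[OF sy inv] by simp
qed

lemma variational:
  assumes "pdc c M"
  shows "2 * (x \<bullet> y) - qf M y \<le> qf (matrix_inv M) x"
proof -
  have inv: "invertible M" using pdc_invertible[OF assms] .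
  have sy: "symm M" using assms pdc_def by blast
  let ?z = "matrix_inv M *v x"
  have "0 \<le> qf M (y - ?z)" using pdc_psd[OF assms] .
  also have "\<dots> = qf M y - 2 * (y \<bullet> x) + qf (matrix_inv M) x"
    using qf_diff_symm[OF sy, of y ?z] inv_mv[OF inv] qf_inv_eq[OF sy inv] by simp
  finally show ?thesis by (simp add: inner_commute)
qed

lemma mat_mul_outer: "S ** outer a b = outer (S *v a) (b::real^'n)"
  by (simp add: outer_def matrix_matrix_mult_def matrix_vector_mult_def vec_eq_iff sum_distrib_right mult.assoc)

lemma det_update:
  fixes S :: "real^'n^'n"
  assumes "invertible S"
  shows "det (S + outer v v) = det S * (1 + qf (matrix_inv S) v)"
proof -
  have "S + outer v v = S ** (mat 1 + outer (matrix_inv S *v v) v)"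
    by (simp add: matrix_add_ldistrib mat_mul_outer inv_mv[OF assms])
  then have "det (S + outer v v) = det S * det (mat 1 + outer (matrix_inv S *v v) v)"
    by (simp add: det_mul)
  then show ?thesis by (simp add: det_rank1 qf_def inner_commute)
qed

lemma pdc_add_outer: "pdc c S \<Longrightarrow> pdc c (S + outer v v)"
proof -
  assume a: "pdc c S"
  have "c * (x \<bullet> x) \<le> qf (S + outer v v) x" for x
  proof -
    have "c * (x \<bullet> x) \<le> qf S x" using a unfolding pdc_def by blast
    moreover have "qf (S + outer v v) x = qf S x + (v \<bullet> x)^2" by (simp add: qf_add_mat qf_outer)
    moreover have "0 \<le> (v \<bullet> x)^2" by simp
    ultimately show ?thesis by linarith
  qed
  moreover have "symm (S + outer v v)" using a symm_add[OF _ symm_outer] unfolding pdc_def by blast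
  ultimately show ?thesis using a unfolding pdc_def by blast
qed


lemma div_sq_aux: "0 < (d::real) \<Longrightarrow> d * (q / d^2) = q / d"
  by (simp add: power2_eq_square)

lemma qf_sum_outer:
  "qf (S + (\<Sum>j\<in>J. outer (v j) (v j))) y = qf S y + (\<Sum>j\<in>J. (v j \<bullet> y)^2)"
  by (simp add: qf_add_mat qf_sum_mat qf_outer)

lemma qf_sum_bound:
  assumes "pdc c S"
  shows "qf (S + (\<Sum>j\<in>J. outer (v j) (v j))) y \<le> (1 + (\<Sum>j\<in>J. qf (matrix_inv S) (v j))) * qf S y"
proof -
  have "(\<Sum>j\<in>J. (v j \<bullet> y)^2) \<le> (\<Sum>j\<in>J. qf (matrix_inv S) (v j) * qf S y)"
    by (rule sum_mono) (rule cs_inv[OF assms])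
  also have "\<dots> = (\<Sum>j\<in>J. qf (matrix_inv S) (v j)) * qf S y" by (simp add: sum_distrib_right)
  finally have h: "(\<Sum>j\<in>J. (v j \<bullet> y)^2) \<le> (\<Sum>j\<in>J. qf (matrix_inv S) (v j)) * qf S y" .
  have "(1 + (\<Sum>j\<in>J. qf (matrix_inv S) (v j))) * qf S y = qf S y + (\<Sum>j\<in>J. qf (matrix_inv S) (v j)) * qf S y"
    by (simp add: distrib_right)
  then show ?thesis unfolding qf_sum_outer using h by linarith
qed

lemma inv_ratio_step:
  assumes "pdc c S1"
  shows "qf (matrix_inv S1) x \<le> (1 + qf (matrix_inv S1) v) * qf (matrix_inv (S1 + outer v v)) x"
proof -
  let ?a = "qf (matrix_inv S1) v" and ?q = "qf (matrix_inv S1) x"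
  have a0: "0 \<le> ?a" by (rule qf_inv_nonneg[OF assms])
  have q0: "0 \<le> ?q" by (rule qf_inv_nonneg[OF assms])
  have sy: "symm S1" and inv: "invertible S1" using assms pdc_def pdc_invertible by auto
  define y where "y = (1 / (1 + ?a)) *\<^sub>R (matrix_inv S1 *v x)"
  have pd2: "pdc c (S1 + outer v v)" by (rule pdc_add_outer[OF assms])
  have "2 * (x \<bullet> y) - qf (S1 + outer v v) y \<le> qf (matrix_inv (S1 + outer v v)) x"
    by (rule variational[OF pd2])
  moreover have "x \<bullet> y = ?q / (1 + ?a)"
    by (simp add: y_def qf_def)
  moreover have "qf S1 y = ?q / (1 + ?a)^2"
    unfolding y_def qf_scale qf_inv_eq[OF sy inv] by (simp add: power_divide)
  moreover have "(v \<bullet> y)^2 \<le> ?a * qf S1 y" by (rule cs_inv[OF assms])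
  moreover have "qf (S1 + outer v v) y = qf S1 y + (v \<bullet> y)^2" by (simp add: qf_add_mat qf_outer)
  ultimately have "2 * (?q / (1 + ?a)) - (?q / (1 + ?a)^2 + ?a * (?q / (1 + ?a)^2)) \<le> qf (matrix_inv (S1 + outer v v)) x"
    by (smt (verit, ccfv_SIG) mult_left_mono a0)
  moreover have "2 * (?q / (1 + ?a)) - (?q / (1 + ?a)^2 + ?a * (?q / (1 + ?a)^2)) = ?q / (1 + ?a)"
  proof -
    have "?q / (1 + ?a)^2 + ?a * (?q / (1 + ?a)^2) = (1 + ?a) * (?q / (1 + ?a)^2)" by (simp only: distrib_right mult_1_left)
    also have "\<dots> = ?q / (1 + ?a)" by (rule div_sq_aux) (use a0 in simp)
    finally show ?thesis by simp
  qed
  ultimately have "?q / (1 + ?a) \<le> qf (matrix_inv (S1 + outer v v)) x" by simp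
  then show ?thesis using a0 by (simp add: field_simps mult.commute)
qed

lemma gain_step:
  assumes "pdc c S" "pdc c S1"
    and bnd: "\<And>y. qf S1 y \<le> (1 + B) * qf S y" and B0: "0 \<le> B"
  shows "qf (matrix_inv S) v / (1 + B) \<le> qf (matrix_inv S1) v"
proof -
  let ?q = "qf (matrix_inv S) v"
  have q0: "0 \<le> ?q" by (rule qf_inv_nonneg[OF assms(1)])
  have sy: "symm S" and inv: "invertible S" using assms pdc_def pdc_invertible by auto
  define y where "y = (1 / (1 + B)) *\<^sub>R (matrix_inv S *v v)"
  have "2 * (v \<bullet> y) - qf S1 y \<le> qf (matrix_inv S1) v"
    by (rule variational[OF assms(2)])
  moreover have "v \<bullet> y = ?q / (1 + B)"
    by (simp add: y_def qf_def)
  moreover have "qf S y = ?q / (1 + B)^2"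
    unfolding y_def qf_scale qf_inv_eq[OF sy inv] by (simp add: power_divide)
  moreover have "qf S1 y \<le> (1 + B) * qf S y" by (rule bnd)
  moreover have "(1 + B) * (?q / (1 + B)^2) = ?q / (1 + B)" by (rule div_sq_aux) (use B0 in simp)
  ultimately have "2 * (?q / (1 + B)) - ?q / (1 + B) \<le> qf (matrix_inv S1) v"
    by (smt (verit))
  moreover have "2 * (?q / (1 + B)) - ?q / (1 + B) = ?q / (1 + B)" by simp
  ultimately show ?thesis by simp
qed

lemma rank1_chain:
  fixes S :: "real^'n^'n" and v :: "'j \<Rightarrow> real^'n"
  assumes S: "pdc c S" "0 < det S" and fin: "finite J"
  shows "pdc c (S + (\<Sum>j\<in>J. outer (v j) (v j)))
    \<and> det S * (1 + (\<Sum>j\<in>J. qf (matrix_inv S) (v j))) \<le> det (S + (\<Sum>j\<in>J. outer (v j) (v j)))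
    \<and> (\<forall>x. det S * qf (matrix_inv S) x \<le> det (S + (\<Sum>j\<in>J. outer (v j) (v j))) * qf (matrix_inv (S + (\<Sum>j\<in>J. outer (v j) (v j)))) x)"
  using fin
proof (induction J rule: finite_induct)
  case empty
  then show ?case using S by simp
next
  case (insert j J)
  define S1 where "S1 = S + (\<Sum>j\<in>J. outer (v j) (v j))"
  define B where "B = (\<Sum>j\<in>J. qf (matrix_inv S) (v j))"
  have S2: "S + (\<Sum>j\<in>insert j J. outer (v j) (v j)) = S1 + outer (v j) (v j)"
    using insert by (simp add: S1_def algebra_simps)
  have IH1: "pdc c S1" and IH2: "det S * (1 + B) \<le> det S1"
    and IH3: "\<And>x. det S * qf (matrix_inv S) x \<le> det S1 * qf (matrix_inv S1) x"
    using insert.IH unfolding S1_def B_def by auto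
  have B0: "0 \<le> B" unfolding B_def by (rule sum_nonneg) (rule qf_inv_nonneg[OF S(1)])
  let ?a = "qf (matrix_inv S1) (v j)"
  let ?q = "qf (matrix_inv S) (v j)"
  have a0: "0 \<le> ?a" by (rule qf_inv_nonneg[OF IH1])
  have inv1: "invertible S1" using pdc_invertible[OF IH1] .
  have det2: "det (S1 + outer (v j) (v j)) = det S1 * (1 + ?a)" by (rule det_update[OF inv1])
  have gain: "?q / (1 + B) \<le> ?a"
    by (rule gain_step[OF S(1) IH1 _ B0]) (unfold S1_def B_def, rule qf_sum_bound[OF S(1)])
  have dS1: "0 < det S1" using IH2 B0 S(2)
    by (smt (verit) mult_pos_pos)
  have "det S * (1 + (B + ?q)) = det S * (1 + B) * (1 + ?q / (1 + B))"
    using B0 by (simp add: field_simps)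
  also have "\<dots> \<le> det S1 * (1 + ?a)"
  proof (rule mult_mono)
    show "det S * (1 + B) \<le> det S1" by (rule IH2)
    show "1 + ?q / (1 + B) \<le> 1 + ?a" using gain by simp
    show "0 \<le> det S1" using dS1 by simp
    show "0 \<le> 1 + ?q / (1 + B)" using B0 qf_inv_nonneg[OF S(1)] by simp
  qed
  finally have P2: "det S * (1 + (\<Sum>j\<in>insert j J. qf (matrix_inv S) (v j))) \<le> det (S1 + outer (v j) (v j))"
    using insert det2 unfolding B_def by (simp add: algebra_simps)
  have P3: "det S * qf (matrix_inv S) x \<le> det (S1 + outer (v j) (v j)) * qf (matrix_inv (S1 + outer (v j) (v j))) x" for x
  proof -
    have "det S * qf (matrix_inv S) x \<le> det S1 * qf (matrix_inv S1) x" by (rule IH3)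
    also have "\<dots> \<le> det S1 * ((1 + ?a) * qf (matrix_inv (S1 + outer (v j) (v j))) x)"
      by (rule mult_left_mono[OF inv_ratio_step[OF IH1]]) (use dS1 in simp)
    finally show ?thesis unfolding det2 by (simp add: mult.assoc)
  qed
  show ?case unfolding S2 using P2 P3 pdc_add_outer[OF IH1] by blast
qed


lemma inv_mono:
  assumes A: "pdc c A" and B: "pdc c' B" and le: "\<And>y. qf A y \<le> qf B y"
  shows "qf (matrix_inv B) x \<le> qf (matrix_inv A) x"
proof -
  have sy: "symm B" and inv: "invertible B" using B pdc_def pdc_invertible by auto
  let ?y = "matrix_inv B *v x"
  have "2 * (x \<bullet> ?y) - qf A ?y \<le> qf (matrix_inv A) x" by (rule variational[OF A])
  moreover have "x \<bullet> ?y = qf (matrix_inv B) x" by (simp add: qf_def)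
  moreover have "qf A ?y \<le> qf (matrix_inv B) x" using le[of ?y] qf_inv_eq[OF sy inv] by simp
  ultimately show ?thesis by linarith
qed

lemma qf_inv_le:
  assumes S: "pdc c S"
  shows "qf (matrix_inv S) x \<le> (x \<bullet> x) / c"
proof -
  have sy: "symm S" and inv: "invertible S" and c: "0 < c" using S pdc_def pdc_invertible by auto
  let ?z = "matrix_inv S *v x"
  let ?q = "qf (matrix_inv S) x"
  have q: "?q = ?z \<bullet> x" by (simp add: qf_def inner_commute)
  have "c * (?z \<bullet> ?z) \<le> qf S ?z" using S pdc_def by blast
  also have "qf S ?z = ?q" by (rule qf_inv_eq[OF sy inv])
  finally have h1: "c * (?z \<bullet> ?z) \<le> ?q" .
  have h2: "?q^2 \<le> (?z \<bullet> ?z) * (x \<bullet> x)" unfolding q by (rule Cauchy_Schwarz_ineq)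
  have q0: "0 \<le> ?q" by (rule qf_inv_nonneg[OF S])
  show ?thesis
  proof (cases "?q = 0")
    case True then show ?thesis using c by simp
  next
    case False
    then have qp: "0 < ?q" using q0 by simp
    have "?q^2 \<le> (?q / c) * (x \<bullet> x)"
      using h2 h1 c by (smt (verit, best) inner_ge_zero mult_right_mono pos_le_divide_eq mult.commute)
    moreover have "(?q / c) * (x \<bullet> x) = ?q * ((x \<bullet> x) / c)" by simp
    ultimately have "?q * ?q \<le> ?q * ((x \<bullet> x) / c)" by (simp add: power2_eq_square)
    then show ?thesis using mult_le_cancel_left_pos[OF qp] by blast
  qed
qed

definition pd :: "real^'n^'n \<Rightarrow> bool" where
  "pd S \<longleftrightarrow> symm S \<and> (\<forall>x. x \<noteq> 0 \<longrightarrow> 0 < qf S x)"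

lemma pdc_pd: "pdc c S \<Longrightarrow> pd S"
proof -
  assume a: "pdc c S"
  have "0 < qf S x" if "x \<noteq> 0" for x
  proof -
    have "0 < x \<bullet> x" using that by simp
    then have "0 < c * (x \<bullet> x)" using a unfolding pdc_def by simp
    also have "\<dots> \<le> qf S x" using a unfolding pdc_def by blast
    finally show ?thesis .
  qed
  then show ?thesis using a unfolding pdc_def pd_def by blast
qed

definition ev :: "'n \<Rightarrow> real^'n" where "ev k = (\<chi> i. if i = k then 1 else 0)"

lemma ev_nz: "ev k \<noteq> 0"
proof
  assume "ev k = 0"
  then have "ev k $ k = 0" by simp
  then show False by (simp add: ev_def)
qed

lemma sum_delta_mult: "(\<Sum>l\<in>UNIV. f l * (if l = i then 1 else 0)) = (f (i::'n::finite) :: real)"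
proof -
  have "(\<Sum>l\<in>UNIV. f l * (if l = i then 1 else 0)) = (\<Sum>l\<in>UNIV. if l = i then f l else 0)"
    by (rule sum.cong) auto
  then show ?thesis by simp
qed

lemma sum_delta_mult': "(\<Sum>l\<in>UNIV. (if l = i then 1 else 0) * f l) = (f (i::'n::finite) :: real)"
  using sum_delta_mult[of f i] by (simp add: mult.commute)

lemma mv_ev: "S *v ev i = (\<chi> j. S$j$i)"
  by (simp add: matrix_vector_mult_def ev_def vec_eq_iff sum_delta_mult)

lemma qf_ev: "qf S (ev i) = S$i$i"
  unfolding qf_def mv_ev by (simp add: inner_vec_def ev_def sum_delta_mult')

lemma pd_diag: "pd S \<Longrightarrow> 0 < S$i$i"
  using qf_ev[of S i] ev_nz[of i] unfolding pd_def by metis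

lemma inner_ev: "x \<bullet> ev k = (x::real^'n) $ k"
  by (simp add: inner_vec_def ev_def sum_delta_mult)

lemma mm_diff_r: "(A - B) ** C = A ** C - B ** (C::real^'n^'n)"
  by (simp add: matrix_matrix_mult_def vec_eq_iff left_diff_distrib sum_subtractf)

lemma mm_diff_l: "C ** (A - B) = C ** A - C ** (B::real^'n^'n)"
  by (simp add: matrix_matrix_mult_def vec_eq_iff right_diff_distrib sum_subtractf)

lemma outer_mul: "outer a b ** S = outer a (transpose S *v (b::real^'n))"
  by (simp add: outer_def matrix_matrix_mult_def matrix_vector_mult_def transpose_def vec_eq_iff
      sum_distrib_left mult.commute mult.left_commute)

lemma transpose_E: "transpose (mat 1 - outer u (ev k)) = mat 1 - outer (ev k) (u::real^'n)"
  by (auto simp: transpose_def outer_def mat_def vec_eq_iff)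

lemma elim_entry:
  fixes S :: "real^'n^'n" and u :: "real^'n" and k :: 'n
  defines "E \<equiv> mat 1 - outer u (ev k)"
  shows "(E ** S ** transpose E)$i$j = S$i$j - u$i * S$k$j - u$j * (S$i$k - u$i * S$k$k)"
proof -
  define r where "r = transpose S *v ev k"
  have r: "r$m = S$k$m" for m unfolding r_def mv_ev by (simp add: transpose_def)
  have ES: "E ** S = S - outer u r" unfolding E_def r_def by (simp add: mm_diff_r outer_mul)
  have tE: "transpose E = mat 1 - outer (ev k) u" unfolding E_def by (rule transpose_E)
  have "E ** S ** transpose E = (S - outer u r) ** (mat 1 - outer (ev k) u)"
    by (simp only: ES tE)
  also have "\<dots> = (S - outer u r) - outer ((S - outer u r) *v ev k) u"
    by (simp add: mm_diff_l mat_mul_outer)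
  finally have M1: "E ** S ** transpose E = (S - outer u r) - outer ((S - outer u r) *v ev k) u" .
  have M2: "(S - outer u r) *v ev k = (\<chi> j. S$j$k) - (r \<bullet> ev k) *\<^sub>R u"
    unfolding matrix_vector_mult_diff_rdistrib outer_mv by (simp only: mv_ev)
  have "(E ** S ** transpose E)$i$j = S$i$j - u$i * r$j - (S$i$k - (r \<bullet> ev k) * u$i) * u$j"
    unfolding M1 M2 by (simp add: outer_def)
  then show ?thesis by (simp add: r inner_ev algebra_simps)
qed

lemma det_elim:
  fixes S :: "real^'n^'n"
  assumes "u$k = 0"
  shows "det ((mat 1 - outer u (ev k)) ** S ** transpose (mat 1 - outer u (ev k))) = det S"
proof -
  have eq: "mat 1 - outer u (ev k) = mat 1 + outer (-u) (ev k)"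
    by (simp add: outer_def vec_eq_iff)
  have "det (mat 1 - outer u (ev k)) = 1 + (-u) \<bullet> ev k" unfolding eq by (rule det_rank1)
  also have "(-u) \<bullet> ev k = 0" using assms by (simp add: inner_ev)
  finally have "det (mat 1 - outer u (ev k)) = 1" by simp
  then show ?thesis by (simp add: det_mul)
qed

lemma pd_elim:
  fixes S :: "real^'n^'n"
  assumes pd: "pd S" and uk: "u$k = 0"
  shows "pd ((mat 1 - outer u (ev k)) ** S ** transpose (mat 1 - outer u (ev k)))"
proof -
  let ?E = "mat 1 - outer u (ev k)"
  have sy: "transpose S = S" using pd pd_def symm_def by auto
  have "symm (?E ** S ** transpose ?E)"
    unfolding symm_def by (simp add: matrix_transpose_mul sy matrix_mul_assoc)
  moreover have "0 < qf (?E ** S ** transpose ?E) y" if y: "y \<noteq> 0" for y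
  proof -
    have Ety: "transpose ?E *v y = y - (u \<bullet> y) *\<^sub>R ev k"
      unfolding transpose_E by (simp add: matrix_vector_mult_diff_rdistrib outer_mv)
    have nz: "transpose ?E *v y \<noteq> 0"
    proof
      assume "transpose ?E *v y = 0"
      then have yy: "y = (u \<bullet> y) *\<^sub>R ev k" using Ety by simp
      then have "u \<bullet> y = (u \<bullet> y) * (u \<bullet> ev k)" by (metis inner_scaleR_right)
      moreover have "u \<bullet> ev k = 0" using uk by (simp add: inner_ev)
      ultimately have "u \<bullet> y = 0" by simp
      then show False using yy y by simp
    qed
    have "qf (?E ** S ** transpose ?E) y = qf S (transpose ?E *v y)"
      unfolding qf_def by (simp add: matrix_vector_mul_assoc[symmetric] dot_mv_transpose)
    then show ?thesis using pd nz unfolding pd_def by simp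
  qed
  ultimately show ?thesis unfolding pd_def by blast
qed

lemma hadamard_gen:
  fixes K :: "'n::finite set"
  assumes "finite K"
  shows "\<And>S::real^'n^'n. pd S \<Longrightarrow> (\<forall>i j. i \<noteq> j \<and> (i \<notin> K \<or> j \<notin> K) \<longrightarrow> S$i$j = 0)
     \<Longrightarrow> det S \<le> (\<Prod>i\<in>UNIV. S$i$i)"
  using assms
proof (induction K rule: finite_induct)
  case empty
  then show ?case by (subst det_diagonal) auto
next
  case (insert k K S)
  have sy: "\<And>i j. S$i$j = S$j$i" using insert.prems(1) unfolding pd_def symm_def
    by (metis transpose_def vec_lambda_beta)
  have Skk: "0 < S$k$k" by (rule pd_diag[OF insert.prems(1)])
  define u :: "real^'n" where "u = (\<chi> i. if i = k then 0 else S$i$k / S$k$k)"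
  have uk: "u$k = 0" by (simp add: u_def)
  define S' where "S' = (mat 1 - outer u (ev k)) ** S ** transpose (mat 1 - outer u (ev k))"
  have ent: "S'$i$j = S$i$j - u$i * S$k$j - u$j * (S$i$k - u$i * S$k$k)" for i j
    unfolding S'_def by (rule elim_entry)
  have pd': "pd S'" unfolding S'_def by (rule pd_elim[OF insert.prems(1) uk])
  have dt: "det S' = det S" unfolding S'_def by (rule det_elim[OF uk])
  have uS: "u$i * S$k$k = S$i$k" if "i \<noteq> k" for i using that Skk by (simp add: u_def)
  have zero: "S'$i$j = 0" if "i \<noteq> j" "i \<notin> K \<or> j \<notin> K" for i j
  proof (cases "i = k")
    case True
    then have "j \<noteq> k" using that by simp
    then show ?thesis using True ent[of i j] uk uS[of j] sy[of j k] by simp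
  next
    case ik: False
    show ?thesis
    proof (cases "j = k")
      case True then show ?thesis using ent[of i j] uk uS[of i] ik by simp
    next
      case jk: False
      show ?thesis
      proof (cases "i \<notin> K")
        case True
        then have "S$i$j = 0" "S$i$k = 0" using insert.prems(2) ik that(1) by auto
        then have "u$i = 0" using ik by (simp add: u_def)
        then show ?thesis using ent[of i j] \<open>S$i$j = 0\<close> \<open>S$i$k = 0\<close> by simp
      next
        case False
        then have jK: "j \<notin> K" using that by simp
        then have "S$i$j = 0" "S$k$j = 0" "S$j$k = 0" using insert.prems(2) jk that(1) by auto
        then have "u$j = 0" using jk by (simp add: u_def)
        then show ?thesis using ent[of i j] \<open>S$i$j = 0\<close> \<open>S$k$j = 0\<close> by simp
      qed
    qed
  qed
  have "det S' \<le> (\<Prod>i\<in>UNIV. S'$i$i)"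
    by (rule insert.IH[OF pd']) (use zero in blast)
  also have "\<dots> \<le> (\<Prod>i\<in>UNIV. S$i$i)"
  proof (rule prod_mono)
    fix i :: 'n
    have "0 < S'$i$i" by (rule pd_diag[OF pd'])
    moreover have "S'$i$i \<le> S$i$i"
    proof (cases "i = k")
      case True then show ?thesis using ent[of i i] uk by simp
    next
      case False
      then have "S'$i$i = S$i$i - u$i * S$k$i" using ent[of i i] uS[of i] by simp
      also have "u$i * S$k$i = (S$i$k)^2 / S$k$k" using False sy[of k i] by (simp add: u_def power2_eq_square)
      finally show ?thesis using Skk by (simp add: divide_nonneg_pos)
    qed
    ultimately show "0 \<le> S'$i$i \<and> S'$i$i \<le> S$i$i" by simp
  qed
  finally show ?case using dt by simp
qed

lemma hadamard: "pd (S::real^'n^'n) \<Longrightarrow> det S \<le> (\<Prod>i\<in>UNIV. S$i$i)"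
  using hadamard_gen[of UNIV S] by simp

lemma ln_det_le:
  fixes S :: "real^'n^'n"
  assumes pd: "pd S" and dp: "0 < det S"
  shows "ln (det S) \<le> real CARD('n) * ln (trace S / real CARD('n))"
proof -
  let ?d = "real CARD('n)"
  define m where "m = trace S / ?d"
  have diag: "\<And>i. 0 < S$i$i" using pd_diag[OF pd] .
  have d0: "0 < ?d" by simp
  have tr: "trace S = (\<Sum>i\<in>UNIV. S$i$i)" by (simp add: trace_def)
  have "0 < (\<Sum>i\<in>UNIV. S$i$i)" by (rule sum_pos) (use diag in auto)
  then have m0: "0 < m" unfolding m_def tr using d0 by simp
  have "ln (det S) \<le> ln (\<Prod>i\<in>UNIV. S$i$i)"
    using hadamard[OF pd] dp by simp
  also have "\<dots> = (\<Sum>i\<in>UNIV. ln (S$i$i))"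
    by (rule ln_prod, simp) (metis diag less_irrefl)
  also have "\<dots> \<le> (\<Sum>i\<in>UNIV. ln m + (S$i$i / m - 1))"
  proof (rule sum_mono)
    fix i :: 'n
    have "ln (S$i$i / m) \<le> S$i$i / m - 1" by (rule ln_le_minus_one) (rule divide_pos_pos[OF diag m0])
    moreover have "ln (S$i$i / m) = ln (S$i$i) - ln m" by (rule ln_divide_pos[OF diag m0])
    ultimately show "ln (S$i$i) \<le> ln m + (S$i$i / m - 1)" by simp
  qed
  also have "\<dots> = ?d * ln m + (trace S / m - ?d)"
    by (simp add: sum.distrib sum_subtractf sum_divide_distrib[symmetric] tr)
  also have "trace S / m = ?d" using m0 d0 unfolding m_def by (simp add: field_simps)
  finally show ?thesis unfolding m_def by simp
qed


lemma jensen_sqrt: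
  fixes p q :: "'i \<Rightarrow> real"
  assumes "\<And>i. i \<in> X \<Longrightarrow> 0 \<le> p i" "\<And>i. i \<in> X \<Longrightarrow> 0 \<le> q i" "(\<Sum>i\<in>X. p i) = 1"
  shows "(\<Sum>i\<in>X. p i * sqrt (q i)) \<le> sqrt (\<Sum>i\<in>X. p i * q i)"
proof -
  have "(\<Sum>i\<in>X. p i * sqrt (q i)) = (\<Sum>i\<in>X. sqrt (p i) * sqrt (p i * q i))"
    by (rule sum.cong) (use assms in \<open>auto simp: real_sqrt_mult real_sqrt_mult_self\<close>)
  moreover have "(\<Sum>i\<in>X. sqrt (p i) * sqrt (p i * q i))^2 \<le> (\<Sum>i\<in>X. (sqrt (p i))^2) * (\<Sum>i\<in>X. (sqrt (p i * q i))^2)"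
    by (rule Cauchy_Schwarz_ineq_sum)
  moreover have "(\<Sum>i\<in>X. (sqrt (p i))^2) = 1" using assms by simp
  moreover have "(\<Sum>i\<in>X. (sqrt (p i * q i))^2) = (\<Sum>i\<in>X. p i * q i)"
    by (rule sum.cong) (use assms in auto)
  ultimately have "(\<Sum>i\<in>X. p i * sqrt (q i))^2 \<le> (\<Sum>i\<in>X. p i * q i)" by simp
  then show ?thesis by (rule real_le_rsqrt)
qed

definition psym :: "real^'n^'n \<Rightarrow> bool" where
  "psym A \<longleftrightarrow> symm A \<and> (\<forall>z. 0 \<le> qf A z)"

lemma wnorm_qf: "wnorm A v = sqrt (qf A v)"
  by (simp add: wnorm_def qf_def)

lemma qf_add_symm:
  assumes "symm M"
  shows "qf M (y + z) = qf M y + 2 * (y \<bullet> (M *v z)) + qf M z"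
proof -
  have "z \<bullet> (M *v y) = y \<bullet> (M *v z)" using dot_mv_symm'[OF assms] by metis
  then show ?thesis
    by (simp add: qf_def matrix_vector_right_distrib inner_add_left inner_add_right)
qed

lemma qf_neg: "qf M (- v) = qf M v"
  using qf_scale[of M "-1" v] by simp

lemma pdc_psym: "pdc c S \<Longrightarrow> psym S"
  using pdc_psd unfolding pdc_def psym_def by blast

lemma pdc_psym_inv: "pdc c S \<Longrightarrow> psym (matrix_inv S)"
  unfolding psym_def using qf_inv_nonneg symm_inv pdc_invertible pdc_def by blast

lemma abs_le_sqrt: "x^2 \<le> y \<Longrightarrow> \<bar>x\<bar> \<le> sqrt (y::real)"
  by (rule real_le_rsqrt) simp

lemma psym_cs:
  assumes "psym A"
  shows "u \<bullet> (A *v v) \<le> wnorm A u * wnorm A v"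
proof -
  have "(u \<bullet> (A *v v))^2 \<le> qf A u * qf A v"
    using cs_psd assms unfolding psym_def by blast
  then have "\<bar>u \<bullet> (A *v v)\<bar> \<le> sqrt (qf A u * qf A v)" by (rule abs_le_sqrt)
  then show ?thesis unfolding wnorm_qf using assms unfolding psym_def
    by (simp add: real_sqrt_mult)
qed

lemma wn_nonneg: "psym A \<Longrightarrow> 0 \<le> wnorm A v"
  by (simp add: wnorm_qf psym_def)

lemma wn_triangle:
  assumes "psym A"
  shows "wnorm A (u + v) \<le> wnorm A u + wnorm A v"
proof -
  have sy: "symm A" using assms psym_def by blast
  have q0: "\<And>z. 0 \<le> qf A z" using assms psym_def by blast
  have "qf A (u + v) = qf A u + 2 * (u \<bullet> (A *v v)) + qf A v" by (rule qf_add_symm[OF sy])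
  also have "\<dots> \<le> (wnorm A u)^2 + 2 * (wnorm A u * wnorm A v) + (wnorm A v)^2"
    using psym_cs[OF assms, of u v] q0 by (simp add: wnorm_qf)
  also have "\<dots> = (wnorm A u + wnorm A v)^2" by (simp add: power2_eq_square algebra_simps)
  finally have "qf A (u + v) \<le> (wnorm A u + wnorm A v)^2" .
  then have "sqrt (qf A (u + v)) \<le> wnorm A u + wnorm A v"
    using wn_nonneg[OF assms, of u] wn_nonneg[OF assms, of v] by (simp add: real_sqrt_le_iff' real_le_lsqrt)
  then show ?thesis by (simp add: wnorm_qf)
qed

lemma wn_scale: "wnorm A (c *\<^sub>R v) = \<bar>c\<bar> * wnorm A v"
  by (simp add: wnorm_qf qf_scale real_sqrt_mult)

lemma wn_neg: "wnorm A (- v) = wnorm A v"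
  by (simp add: wnorm_qf qf_neg)

lemma wn_diff_comm: "wnorm A (u - v) = wnorm A (v - u)"
  by (metis minus_diff_eq wn_neg)

lemma wn_sum:
  assumes "psym A"
  shows "wnorm A (\<Sum>i\<in>X. c i *\<^sub>R v i) \<le> (\<Sum>i\<in>X. \<bar>c i\<bar> * wnorm A (v i))"
proof (induction X rule: infinite_finite_induct)
  case (infinite X) then show ?case by (simp add: wnorm_def)
next
  case empty then show ?case by (simp add: wnorm_def)
next
  case (insert i X)
  have "wnorm A (\<Sum>i\<in>insert i X. c i *\<^sub>R v i) = wnorm A (c i *\<^sub>R v i + (\<Sum>i\<in>X. c i *\<^sub>R v i))"
    using insert by simp
  also have "\<dots> \<le> wnorm A (c i *\<^sub>R v i) + wnorm A (\<Sum>i\<in>X. c i *\<^sub>R v i)" by (rule wn_triangle[OF assms])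
  also have "\<dots> \<le> \<bar>c i\<bar> * wnorm A (v i) + (\<Sum>i\<in>X. \<bar>c i\<bar> * wnorm A (v i))"
    using insert.IH by (simp add: wn_scale)
  finally show ?case using insert by simp
qed

lemma cs_vec:
  assumes "pdc c S"
  shows "\<bar>w \<bullet> d\<bar> \<le> wnorm (matrix_inv S) w * wnorm S d"
proof -
  have "(w \<bullet> d)^2 \<le> qf (matrix_inv S) w * qf S d" by (rule cs_inv[OF assms])
  then have "\<bar>w \<bullet> d\<bar> \<le> sqrt (qf (matrix_inv S) w * qf S d)" by (rule abs_le_sqrt)
  then show ?thesis by (simp add: wnorm_qf real_sqrt_mult)
qed


lemma var_identity:
  fixes \<phi> :: "'i \<Rightarrow> real^'n"
  assumes sy: "symm A" and sp: "(\<Sum>i\<in>X. p i) = 1"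
  defines "E \<equiv> (\<Sum>i\<in>X. p i *\<^sub>R \<phi> i)"
  shows "(\<Sum>i\<in>X. p i * qf A (\<phi> i - E)) = (\<Sum>i\<in>X. p i * qf A (\<phi> i)) - qf A E"
proof -
  have "(\<Sum>i\<in>X. p i * qf A (\<phi> i - E)) = (\<Sum>i\<in>X. p i * qf A (\<phi> i) - 2 * (p i * (\<phi> i \<bullet> (A *v E))) + p i * qf A E)"
    by (rule sum.cong) (simp_all add: qf_diff_symm[OF sy] algebra_simps)
  also have "\<dots> = (\<Sum>i\<in>X. p i * qf A (\<phi> i)) - 2 * (\<Sum>i\<in>X. p i * (\<phi> i \<bullet> (A *v E))) + (\<Sum>i\<in>X. p i) * qf A E"
    by (simp add: sum.distrib sum_subtractf sum_distrib_left sum_distrib_right)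
  also have "(\<Sum>i\<in>X. p i * (\<phi> i \<bullet> (A *v E))) = qf A E"
    unfolding qf_def E_def by (simp add: inner_sum_left)
  finally show ?thesis using sp by simp
qed

lemma var_le:
  fixes \<phi> :: "'i \<Rightarrow> real^'n"
  assumes ps: "psym A" and sp: "(\<Sum>i\<in>X. p i) = 1"
  shows "(\<Sum>i\<in>X. p i * qf A (\<phi> i - (\<Sum>i\<in>X. p i *\<^sub>R \<phi> i))) \<le> (\<Sum>i\<in>X. p i * qf A (\<phi> i))"
  using var_identity[where A=A and X=X and p=p and \<phi>=\<phi>] ps sp unfolding psym_def by (smt (verit))

lemma qf_lin2:
  assumes sy: "symm A"
  shows "qf A (a *\<^sub>R U - b *\<^sub>R W) = a^2 * qf A U - 2 * (a * b) * (U \<bullet> (A *v W)) + b^2 * qf A W"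
proof -
  have "qf A (a *\<^sub>R U - b *\<^sub>R W) = qf A (a *\<^sub>R U) - 2 * ((a *\<^sub>R U) \<bullet> (A *v (b *\<^sub>R W))) + qf A (b *\<^sub>R W)"
    by (rule qf_diff_symm[OF sy])
  also have "(a *\<^sub>R U) \<bullet> (A *v (b *\<^sub>R W)) = a * b * (U \<bullet> (A *v W))"
    by (simp add: matrix_vector_mult_scaleR)
  finally show ?thesis by (simp add: qf_scale)
qed

lemma kappa_bound:
  fixes \<phi> :: "'i \<Rightarrow> real^'n"
  assumes ps: "psym A" and fin: "finite X" and p0: "\<And>i. i \<in> X \<Longrightarrow> 0 \<le> p i"
    and sp: "(\<Sum>i\<in>X. p i) = 1" and j: "j \<in> X" and z: "z \<in> X" and \<phi>z: "\<phi> z = 0"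
    and k0: "0 < \<kappa>" and kp: "\<kappa> \<le> p j * p z"
  shows "\<kappa> * qf A (\<phi> j) \<le> (\<Sum>i\<in>X. p i * qf A (\<phi> i - (\<Sum>i\<in>X. p i *\<^sub>R \<phi> i)))"
proof -
  define E where "E = (\<Sum>i\<in>X. p i *\<^sub>R \<phi> i)"
  have sy: "symm A" and q0: "\<And>v. 0 \<le> qf A v" using ps psym_def by auto
  have nn: "\<And>i. i \<in> X \<Longrightarrow> 0 \<le> p i * qf A (\<phi> i - E)" using p0 q0 by simp
  show ?thesis
  proof (cases "j = z")
    case True
    then have "qf A (\<phi> j) = 0" using \<phi>z by (simp add: qf_def)
    then show ?thesis using sum_nonneg[of X "\<lambda>i. p i * qf A (\<phi> i - E)"] nn unfolding E_def by simp
  next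
    case False
    let ?a = "p j" and ?b = "p z"
    have "?a * qf A (\<phi> j - E) + ?b * qf A (\<phi> z - E) = (\<Sum>i\<in>{j, z}. p i * qf A (\<phi> i - E))"
      using False by simp
    also have "\<dots> \<le> (\<Sum>i\<in>X. p i * qf A (\<phi> i - E))"
      by (rule sum_mono2[OF fin]) (use j z nn in auto)
    finally have s1: "?a * qf A (\<phi> j - E) + ?b * qf A E \<le> (\<Sum>i\<in>X. p i * qf A (\<phi> i - E))"
      using \<phi>z qf_neg[of A E] by simp
    have "?a + ?b = (\<Sum>i\<in>{j, z}. p i)" using False by simp
    also have "\<dots> \<le> 1" unfolding sp[symmetric] by (rule sum_mono2[OF fin]) (use j z p0 in auto)
    finally have ab1: "?a + ?b \<le> 1" .
    have a0: "0 \<le> ?a" "0 \<le> ?b" using p0 j z by auto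
    have abp: "0 < ?a * ?b" using k0 kp by simp
    then have abs0: "0 < ?a + ?b" using a0 by (smt (verit) mult_nonneg_nonneg mult_eq_0_iff)
    define U where "U = \<phi> j - E"
    have f1: "qf A (\<phi> j) = qf A U + 2 * (U \<bullet> (A *v E)) + qf A E"
    proof -
      have "\<phi> j = U + E" by (simp add: U_def)
      then show ?thesis using qf_add_symm[OF sy, of U E] by simp
    qed
    have f2: "qf A (?a *\<^sub>R U - ?b *\<^sub>R E) = ?a^2 * qf A U - 2 * (?a * ?b) * (U \<bullet> (A *v E)) + ?b^2 * qf A E"
      by (rule qf_lin2[OF sy])
    have iden: "(?a + ?b) * (?a * qf A U + ?b * qf A E) - ?a * ?b * qf A (\<phi> j) = qf A (?a *\<^sub>R U - ?b *\<^sub>R E)"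
      unfolding f1 f2 by (simp add: power2_eq_square algebra_simps)
    have "?a * ?b * qf A (\<phi> j) \<le> (?a + ?b) * (?a * qf A U + ?b * qf A E)"
      using iden q0[of "?a *\<^sub>R U - ?b *\<^sub>R E"] by linarith
    also have "\<dots> \<le> 1 * (?a * qf A U + ?b * qf A E)"
      by (rule mult_right_mono[OF ab1]) (use a0 q0 in simp)
    finally have "?a * ?b * qf A (\<phi> j) \<le> ?a * qf A U + ?b * qf A E" by simp
    moreover have "\<kappa> * qf A (\<phi> j) \<le> ?a * ?b * qf A (\<phi> j)" by (rule mult_right_mono[OF kp q0])
    ultimately show ?thesis using s1 unfolding U_def E_def by linarith
  qed
qed

lemma f_compare:
  fixes \<phi> :: "'i \<Rightarrow> real^'n"
  assumes ps: "psym A" and fin: "finite X"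
    and p0: "\<And>i. i \<in> X \<Longrightarrow> 0 \<le> p i" and sp: "(\<Sum>i\<in>X. p i) = 1"
    and p0': "\<And>i. i \<in> X \<Longrightarrow> 0 \<le> p' i" and sp': "(\<Sum>i\<in>X. p' i) = 1"
    and Mb: "\<And>i. i \<in> X \<Longrightarrow> wnorm A (\<phi> i) \<le> Mb"
  shows "(\<Sum>i\<in>X. p i * wnorm A (\<phi> i - (\<Sum>i\<in>X. p i *\<^sub>R \<phi> i)))
     \<le> (\<Sum>i\<in>X. p' i * wnorm A (\<phi> i - (\<Sum>i\<in>X. p' i *\<^sub>R \<phi> i))) + 2 * Mb * (\<Sum>i\<in>X. \<bar>p i - p' i\<bar>)"
proof -
  define E where "E = (\<Sum>i\<in>X. p i *\<^sub>R \<phi> i)"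
  define E' where "E' = (\<Sum>i\<in>X. p' i *\<^sub>R \<phi> i)"
  define TV where "TV = (\<Sum>i\<in>X. \<bar>p i - p' i\<bar>)"
  let ?N = "wnorm A"
  have NE: "?N E \<le> Mb"
  proof -
    have "?N E \<le> (\<Sum>i\<in>X. \<bar>p i\<bar> * ?N (\<phi> i))" unfolding E_def by (rule wn_sum[OF ps])
    also have "\<dots> \<le> (\<Sum>i\<in>X. p i * Mb)"
      by (rule sum_mono) (use p0 Mb in \<open>auto intro: mult_left_mono\<close>)
    also have "\<dots> = Mb" using sp by (simp add: sum_distrib_right[symmetric])
    finally show ?thesis .
  qed
  have NEE: "?N (E - E') \<le> Mb * TV"
  proof -
    have "E - E' = (\<Sum>i\<in>X. (p i - p' i) *\<^sub>R \<phi> i)"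
      unfolding E_def E'_def by (simp add: sum_subtractf scaleR_left_diff_distrib)
    then have "?N (E - E') \<le> (\<Sum>i\<in>X. \<bar>p i - p' i\<bar> * ?N (\<phi> i))" using wn_sum[OF ps] by simp
    also have "\<dots> \<le> (\<Sum>i\<in>X. \<bar>p i - p' i\<bar> * Mb)"
      by (rule sum_mono) (use Mb in \<open>auto intro: mult_left_mono\<close>)
    also have "\<dots> = Mb * TV" unfolding TV_def by (simp add: sum_distrib_left mult.commute)
    finally show ?thesis .
  qed
  have tri: "?N (\<phi> i - E) \<le> ?N (\<phi> i - E') + ?N (E - E')" for i
  proof -
    have "\<phi> i - E = (\<phi> i - E') + (E' - E)" by simp
    then have "?N (\<phi> i - E) \<le> ?N (\<phi> i - E') + ?N (E' - E)" using wn_triangle[OF ps] by metis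
    then show ?thesis using wn_diff_comm[of A E' E] by simp
  qed
  have rng: "0 \<le> ?N (\<phi> i - E) \<and> ?N (\<phi> i - E) \<le> 2 * Mb" if "i \<in> X" for i
  proof -
    have "?N (\<phi> i - E) = ?N (\<phi> i + (- E))" by simp
    also have "\<dots> \<le> ?N (\<phi> i) + ?N (- E)" by (rule wn_triangle[OF ps])
    also have "\<dots> \<le> 2 * Mb" using Mb[OF that] NE by (simp add: wn_neg)
    finally show ?thesis using wn_nonneg[OF ps] by simp
  qed
  have "(\<Sum>i\<in>X. p i * ?N (\<phi> i - E)) = (\<Sum>i\<in>X. p' i * ?N (\<phi> i - E)) + (\<Sum>i\<in>X. (p i - p' i) * (?N (\<phi> i - E) - Mb))"
  proof -
    have "(\<Sum>i\<in>X. (p i - p' i) * (?N (\<phi> i - E) - Mb)) = (\<Sum>i\<in>X. p i * ?N (\<phi> i - E)) - (\<Sum>i\<in>X. p' i * ?N (\<phi> i - E)) - Mb * ((\<Sum>i\<in>X. p i) - (\<Sum>i\<in>X. p' i))"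
      by (simp add: algebra_simps sum_subtractf sum.distrib sum_distrib_left)
    then show ?thesis using sp sp' by simp
  qed
  also have "(\<Sum>i\<in>X. (p i - p' i) * (?N (\<phi> i - E) - Mb)) \<le> (\<Sum>i\<in>X. \<bar>p i - p' i\<bar> * Mb)"
  proof (rule sum_mono)
    fix i assume i: "i \<in> X"
    have "\<bar>?N (\<phi> i - E) - Mb\<bar> \<le> Mb" using rng[OF i] by linarith
    then have "(p i - p' i) * (?N (\<phi> i - E) - Mb) \<le> \<bar>p i - p' i\<bar> * \<bar>?N (\<phi> i - E) - Mb\<bar>"
      by (metis abs_ge_self abs_mult)
    also have "\<dots> \<le> \<bar>p i - p' i\<bar> * Mb" by (rule mult_left_mono) (use \<open>\<bar>?N (\<phi> i - E) - Mb\<bar> \<le> Mb\<close> in auto)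
    finally show "(p i - p' i) * (?N (\<phi> i - E) - Mb) \<le> \<bar>p i - p' i\<bar> * Mb" .
  qed
  also have "(\<Sum>i\<in>X. p' i * ?N (\<phi> i - E)) \<le> (\<Sum>i\<in>X. p' i * (?N (\<phi> i - E') + ?N (E - E')))"
    by (rule sum_mono) (use p0' tri in \<open>auto intro: mult_left_mono\<close>)
  also have "\<dots> = (\<Sum>i\<in>X. p' i * ?N (\<phi> i - E')) + ?N (E - E')"
    using sp' by (simp add: algebra_simps sum.distrib sum_distrib_right[symmetric])
  finally have "(\<Sum>i\<in>X. p i * ?N (\<phi> i - E)) \<le> (\<Sum>i\<in>X. p' i * ?N (\<phi> i - E')) + ?N (E - E') + Mb * TV"
    unfolding TV_def by (simp add: sum_distrib_left mult.commute)
  then show ?thesis using NEE unfolding E_def E'_def TV_def by linarith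
qed


lemma tanh_bound:
  assumes "0 \<le> (e::real)"
  shows "(exp e - 1) / (exp e + 1) \<le> e"
proof -
  have "1 + (-e) \<le> exp (-e)" by (rule exp_ge_add_one_self)
  then have "(1 - e) * exp e \<le> exp (-e) * exp e" by (simp add: mult_right_mono)
  also have "exp (-e) * exp e = 1" by (simp add: exp_minus field_simps)
  finally have "exp e - 1 \<le> e * exp e" by (simp add: algebra_simps)
  also have "\<dots> \<le> e * (exp e + 1)" using assms by (simp add: algebra_simps)
  finally show ?thesis by (simp add: divide_le_eq add_pos_pos)
qed

lemma chord:
  fixes m M w W :: real
  assumes "m \<le> w" "w \<le> M" "m \<le> W" "W \<le> M"
  shows "\<bar>w - W\<bar> * (M - m) \<le> (W - m) * (M - m) + (w - m) * (M + m - 2 * W)"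
proof (cases "W \<le> w")
  case True
  have "(W - m) * (M - m) + (w - m) * (M + m - 2 * W) - (w - W) * (M - m) = 2 * ((W - m) * (M - w))"
    by (simp add: algebra_simps)
  moreover have "0 \<le> (W - m) * (M - w)" using assms by simp
  ultimately show ?thesis using True by simp
next
  case False
  have "(W - m) * (M - m) + (w - m) * (M + m - 2 * W) - (W - w) * (M - m) = 2 * ((w - m) * (M - W))"
    by (simp add: algebra_simps)
  moreover have "0 \<le> (w - m) * (M - W)" using assms by simp
  ultimately show ?thesis using False by simp
qed

lemma tv_core:
  fixes q w :: "'i \<Rightarrow> real"
  assumes fin: "finite X" and q0: "\<And>i. i \<in> X \<Longrightarrow> 0 \<le> q i" and sq: "(\<Sum>i\<in>X. q i) = 1"
    and s1: "1 < s" and wl: "\<And>i. i \<in> X \<Longrightarrow> 1 / s \<le> w i" and wu: "\<And>i. i \<in> X \<Longrightarrow> w i \<le> s"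
  defines "W \<equiv> (\<Sum>i\<in>X. q i * w i)"
  shows "(\<Sum>i\<in>X. q i * \<bar>w i - W\<bar>) \<le> 2 * W * (s - 1) / (s + 1)"
proof -
  define m where "m = 1 / s"
  have s0: "0 < s" using s1 by simp
  have "1 / s < 1" using s1 by simp
  then have mM: "m < s" unfolding m_def using s1 by linarith
  have Wl: "m \<le> W"
  proof -
    have "(\<Sum>i\<in>X. q i * m) \<le> W" unfolding W_def
    proof (rule sum_mono)
      fix i assume "i \<in> X"
      then show "q i * m \<le> q i * w i" using q0 wl unfolding m_def by (intro mult_left_mono) auto
    qed
    then show ?thesis using sq by (simp add: sum_distrib_right[symmetric])
  qed
  have Wu: "W \<le> s"
  proof -
    have "W \<le> (\<Sum>i\<in>X. q i * s)" unfolding W_def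
      by (rule sum_mono) (use q0 wu in \<open>auto intro: mult_left_mono\<close>)
    then show ?thesis using sq by (simp add: sum_distrib_right[symmetric])
  qed
  have "(\<Sum>i\<in>X. q i * \<bar>w i - W\<bar>) * (s - m) = (\<Sum>i\<in>X. q i * (\<bar>w i - W\<bar> * (s - m)))"
    by (simp add: sum_distrib_right mult.assoc)
  also have "\<dots> \<le> (\<Sum>i\<in>X. q i * ((W - m) * (s - m) + (w i - m) * (s + m - 2 * W)))"
    by (rule sum_mono, rule mult_left_mono) (use q0 wl wu Wl Wu chord in \<open>auto simp: m_def\<close>)
  also have "\<dots> = (W - m) * (s - m) * (\<Sum>i\<in>X. q i) + (s + m - 2 * W) * ((\<Sum>i\<in>X. q i * w i) - m * (\<Sum>i\<in>X. q i))"
    by (simp add: algebra_simps sum.distrib sum_subtractf sum_distrib_left sum_distrib_right)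
  also have "\<dots> = 2 * ((W - m) * (s - W))" unfolding sq W_def[symmetric] by (simp add: algebra_simps)
  finally have A: "(\<Sum>i\<in>X. q i * \<bar>w i - W\<bar>) * (s - m) \<le> 2 * ((W - m) * (s - W))" .
  have key: "(W - m) * (s - W) * (s + 1) \<le> W * (s - 1) * (s - m)"
  proof -
    have sWm: "s * (W - m) = W * s - 1" unfolding m_def using s0 by (simp add: field_simps)
    have ssm: "s * (s - m) = s * s - 1" unfolding m_def using s0 by (simp add: field_simps)
    have "s * ((W - m) * (s - W) * (s + 1)) = (s * (W - m)) * (s - W) * (s + 1)"
      by (simp add: ac_simps)
    also have "\<dots> = (W * s - 1) * (s - W) * (s + 1)" unfolding sWm ..
    also have "\<dots> = W * (s - 1) * (s * s - 1) - (s + 1) * s * (W - 1)^2"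
      by (simp add: algebra_simps power2_eq_square)
    also have "\<dots> \<le> W * (s - 1) * (s * s - 1)"
      using s0 by simp
    also have "\<dots> = W * (s - 1) * (s * (s - m))" unfolding ssm ..
    also have "\<dots> = s * (W * (s - 1) * (s - m))" by (simp add: ac_simps)
    finally show ?thesis using s0 by simp
  qed
  have sm: "0 < s - m" using mM by simp
  have "(\<Sum>i\<in>X. q i * \<bar>w i - W\<bar>) * (s - m) \<le> (2 * W * (s - 1) / (s + 1)) * (s - m)"
  proof -
    have "2 * ((W - m) * (s - W)) \<le> 2 * (W * (s - 1) * (s - m) / (s + 1))"
      using key s0 by (simp add: le_divide_eq)
    then show ?thesis using A by (simp add: algebra_simps)
  qed
  from mult_right_le_imp_le[OF this sm] show ?thesis .
qed

lemma softmax_tv: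
  fixes u u' :: "'i \<Rightarrow> real"
  assumes fin: "finite X" and ne: "X \<noteq> {}" and d: "\<And>i. i \<in> X \<Longrightarrow> \<bar>u i - u' i\<bar> \<le> e"
  shows "(\<Sum>i\<in>X. \<bar>exp (u i) / (\<Sum>j\<in>X. exp (u j)) - exp (u' i) / (\<Sum>j\<in>X. exp (u' j))\<bar>) \<le> 2 * e"
proof -
  define Z where "Z = (\<Sum>j\<in>X. exp (u j))"
  define Z' where "Z' = (\<Sum>j\<in>X. exp (u' j))"
  have Z0: "0 < Z" unfolding Z_def by (rule sum_pos[OF fin ne]) simp
  have Z0': "0 < Z'" unfolding Z'_def by (rule sum_pos[OF fin ne]) simp
  obtain i0 where "i0 \<in> X" using ne by blast
  have e0: "0 \<le> e" using d[OF \<open>i0 \<in> X\<close>] by simp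
  define q where "q i = exp (u' i) / Z'" for i
  define w where "w i = exp (u i - u' i)" for i
  define W where "W = (\<Sum>i\<in>X. q i * w i)"
  have q0: "\<And>i. 0 \<le> q i" unfolding q_def using Z0' by simp
  have sq: "(\<Sum>i\<in>X. q i) = 1" unfolding q_def Z'_def using Z0' Z'_def
    by (simp add: sum_divide_distrib[symmetric])
  have WZ: "W = Z / Z'" unfolding W_def q_def w_def Z_def
    by (simp add: sum_divide_distrib[symmetric] exp_diff field_simps)
  have W0: "0 < W" unfolding WZ using Z0 Z0' by simp
  have Pi: "exp (u i) / Z = q i * w i / W" for i
    unfolding WZ q_def w_def using Z0 Z0' by (simp add: exp_diff field_simps)
  have diff: "\<bar>exp (u i) / Z - exp (u' i) / Z'\<bar> = q i * \<bar>w i - W\<bar> / W" for i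
  proof -
    have "exp (u i) / Z - exp (u' i) / Z' = q i * (w i - W) / W"
      unfolding Pi using W0 Z0' by (simp add: q_def field_simps)
    then show ?thesis using q0[of i] W0 by (simp add: abs_mult abs_divide)
  qed
  have S: "(\<Sum>i\<in>X. \<bar>exp (u i) / Z - exp (u' i) / Z'\<bar>) = (\<Sum>i\<in>X. q i * \<bar>w i - W\<bar>) / W"
    unfolding diff by (simp add: sum_divide_distrib)
  show ?thesis
  proof (cases "e = 0")
    case True
    then have "\<And>i. i \<in> X \<Longrightarrow> w i = 1" using d unfolding w_def by fastforce
    then have "W = 1" unfolding W_def using sq by simp
    then have "(\<Sum>i\<in>X. q i * \<bar>w i - W\<bar>) = 0"
      using \<open>\<And>i. i \<in> X \<Longrightarrow> w i = 1\<close> by simp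
    then show ?thesis using S True unfolding Z_def Z'_def by simp
  next
    case False
    then have ep: "0 < e" using e0 by simp
    define s where "s = exp e"
    have s1: "1 < s" unfolding s_def using ep by simp
    have wl: "1 / s \<le> w i" if "i \<in> X" for i
    proof -
      have "-e \<le> u i - u' i" using d[OF that] by linarith
      then have "exp (-e) \<le> w i" unfolding w_def by simp
      then show ?thesis unfolding s_def by (simp add: exp_minus inverse_eq_divide)
    qed
    have wu: "w i \<le> s" if "i \<in> X" for i
    proof -
      have "u i - u' i \<le> e" using d[OF that] by linarith
      then show ?thesis unfolding w_def s_def by simp
    qed
    have "(\<Sum>i\<in>X. q i * \<bar>w i - W\<bar>) \<le> 2 * W * (s - 1) / (s + 1)"
      unfolding W_def by (rule tv_core[OF fin _ sq s1 wl wu]) (use q0 in auto)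
    then have "(\<Sum>i\<in>X. q i * \<bar>w i - W\<bar>) / W \<le> 2 * ((s - 1) / (s + 1))"
      using W0 by (simp add: divide_le_eq mult.commute mult.left_commute)
    also have "(s - 1) / (s + 1) \<le> e" unfolding s_def by (rule tanh_bound) (use e0 in simp)
    finally show ?thesis using S unfolding Z_def Z'_def by simp
  qed
qed


lemma mp_pos:
  assumes "finite (R x y)" "R x y \<noteq> {}"
  shows "0 < mnl_prob R \<phi> \<theta> x y i"
  unfolding mnl_prob_def using assms by (intro divide_pos_pos) (auto intro!: sum_pos)

lemma mp_sum:
  assumes "finite (R x y)" "R x y \<noteq> {}"
  shows "(\<Sum>i\<in>R x y. mnl_prob R \<phi> \<theta> x y i) = 1"
proof -
  have "0 < (\<Sum>s''\<in>R x y. exp (\<phi> x y s'' \<bullet> \<theta>))" using assms by (auto intro!: sum_pos)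
  then show ?thesis unfolding mnl_prob_def by (simp add: sum_divide_distrib[symmetric])
qed

lemma outer_scale: "outer (c *\<^sub>R v) (c *\<^sub>R v) = (c^2) *\<^sub>R outer v (v::real^'n)"
  by (simp add: outer_def vec_eq_iff power2_eq_square)

definition vv where
  "vv R \<phi> \<theta> x y i = sqrt (mnl_prob R \<phi> \<theta> x y i) *\<^sub>R (\<phi> x y i - mean_feat R \<phi> \<theta> x y)"

lemma hess_decomp:
  assumes fin: "finite (R x y)" and ne: "R x y \<noteq> {}"
  shows "mnl_hess R \<phi> \<theta> x y = (\<Sum>i\<in>R x y. outer (vv R \<phi> \<theta> x y i) (vv R \<phi> \<theta> x y i))"
proof -
  let ?p = "\<lambda>i. mnl_prob R \<phi> \<theta> x y i"
  let ?E = "mean_feat R \<phi> \<theta> x y"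
  have p0: "\<And>i. 0 \<le> ?p i" using mp_pos[of R x y, OF fin ne] less_imp_le by blast
  have sp: "(\<Sum>i\<in>R x y. ?p i) = 1" by (rule mp_sum[of R x y, OF fin ne])
  have Ec: "?E $ c = (\<Sum>i\<in>R x y. ?p i * \<phi> x y i $ c)" for c
    by (simp add: mean_feat_def)
  have rhs: "(\<Sum>i\<in>R x y. outer (vv R \<phi> \<theta> x y i) (vv R \<phi> \<theta> x y i)) = (\<Sum>i\<in>R x y. ?p i *\<^sub>R outer (\<phi> x y i - ?E) (\<phi> x y i - ?E))"
    by (rule sum.cong) (simp_all add: vv_def outer_scale p0)
  show ?thesis
  proof (simp only: rhs vec_eq_iff, intro allI)
    fix c d
    have "(\<Sum>i\<in>R x y. ?p i *\<^sub>R outer (\<phi> x y i - ?E) (\<phi> x y i - ?E)) $ c $ d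
        = (\<Sum>i\<in>R x y. ?p i * ((\<phi> x y i $ c - ?E $ c) * (\<phi> x y i $ d - ?E $ d)))"
      by (simp add: outer_def)
    also have "\<dots> = (\<Sum>i\<in>R x y. ?p i * (\<phi> x y i $ c * \<phi> x y i $ d)) - ?E $ d * (\<Sum>i\<in>R x y. ?p i * \<phi> x y i $ c)
        - ?E $ c * (\<Sum>i\<in>R x y. ?p i * \<phi> x y i $ d) + ?E $ c * ?E $ d * (\<Sum>i\<in>R x y. ?p i)"
      by (simp add: algebra_simps sum.distrib sum_subtractf sum_distrib_left sum_distrib_right)
    also have "\<dots> = (\<Sum>i\<in>R x y. ?p i * (\<phi> x y i $ c * \<phi> x y i $ d)) - ?E $ c * ?E $ d"
      unfolding Ec[symmetric] sp by simp
    also have "\<dots> = mnl_hess R \<phi> \<theta> x y $ c $ d"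
      by (simp add: mnl_hess_def outer_def)
    finally show "mnl_hess R \<phi> \<theta> x y $ c $ d = (\<Sum>i\<in>R x y. ?p i *\<^sub>R outer (\<phi> x y i - ?E) (\<phi> x y i - ?E)) $ c $ d"
      by simp
  qed
qed

lemma qf_vv: "qf A (vv R \<phi> \<theta> x y i) = mnl_prob R \<phi> \<theta> x y i * qf A (\<phi> x y i - mean_feat R \<phi> \<theta> x y)"
  unfolding vv_def qf_scale
  by (simp add: less_imp_le mnl_prob_def sum_nonneg)

lemma mnl_tv:
  assumes fin: "finite (R x y)" and ne: "R x y \<noteq> {}"
    and d: "\<And>i. i \<in> R x y \<Longrightarrow> \<bar>\<phi> x y i \<bullet> \<theta> - \<phi> x y i \<bullet> \<theta>'\<bar> \<le> e"
  shows "(\<Sum>i\<in>R x y. \<bar>mnl_prob R \<phi> \<theta> x y i - mnl_prob R \<phi> \<theta>' x y i\<bar>) \<le> 2 * e"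
  unfolding mnl_prob_def
  by (rule softmax_tv[OF fin ne, of "\<lambda>i. \<phi> x y i \<bullet> \<theta>" "\<lambda>i. \<phi> x y i \<bullet> \<theta>'"]) (use d in auto)

lemma trace_outer: "trace (outer v v) = v \<bullet> (v::real^'n)"
  by (simp add: trace_def outer_def inner_vec_def)

lemma qf_mat1: "qf (mat 1) v = v \<bullet> v"
  by (simp add: qf_def)

lemma psym_mat1: "psym (mat 1 :: real^'n^'n)"
  unfolding psym_def qf_mat1 by (simp add: symm_def transpose_def mat_def vec_eq_iff)

lemma trace_sum: "trace (\<Sum>i\<in>X. A i) = (\<Sum>i\<in>X. trace (A i :: real^'n^'n))"
  by (simp add: trace_def sum.swap[of _ UNIV])

lemma trace_hess:
  assumes fin: "finite (R x y)" and ne: "R x y \<noteq> {}"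
    and L: "\<And>i. i \<in> R x y \<Longrightarrow> norm (\<phi> x y i) \<le> L"
  shows "trace (mnl_hess R \<phi> \<theta> x y) \<le> L^2"
proof -
  let ?p = "\<lambda>i. mnl_prob R \<phi> \<theta> x y i"
  have p0: "\<And>i. 0 \<le> ?p i" using mp_pos[of R x y, OF fin ne] less_imp_le by blast
  have sp: "(\<Sum>i\<in>R x y. ?p i) = 1" by (rule mp_sum[of R x y, OF fin ne])
  have "trace (mnl_hess R \<phi> \<theta> x y) = (\<Sum>i\<in>R x y. qf (mat 1) (vv R \<phi> \<theta> x y i))"
    unfolding hess_decomp[of R x y, OF fin ne] trace_sum trace_outer qf_mat1 ..
  also have "\<dots> = (\<Sum>i\<in>R x y. ?p i * qf (mat 1) (\<phi> x y i - mean_feat R \<phi> \<theta> x y))"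
    by (simp only: qf_vv)
  also have "\<dots> \<le> (\<Sum>i\<in>R x y. ?p i * qf (mat 1) (\<phi> x y i))"
    unfolding mean_feat_def by (rule var_le[OF psym_mat1 sp])
  also have "\<dots> \<le> (\<Sum>i\<in>R x y. ?p i * L^2)"
  proof (rule sum_mono, rule mult_left_mono)
    fix i assume i: "i \<in> R x y"
    have "qf (mat 1) (\<phi> x y i) = (norm (\<phi> x y i))^2" by (simp add: qf_mat1 power2_norm_eq_inner)
    also have "\<dots> \<le> L^2" using L[OF i] by (simp add: power_mono)
    finally show "qf (mat 1) (\<phi> x y i) \<le> L^2" .
  qed (rule p0)
  also have "\<dots> = L^2" using sp by (simp add: sum_distrib_right[symmetric])
  finally show ?thesis .
qed


lemma mat_mv: "(mat c :: real^'n^'n) *v x = c *\<^sub>R x"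
proof -
  have "((mat c :: real^'n^'n) *v x) $ i = c * x $ i" for i
  proof -
    have "((mat c :: real^'n^'n) *v x) $ i = (\<Sum>j\<in>UNIV. (mat c :: real^'n^'n) $ i $ j * x $ j)"
      by (simp add: matrix_vector_mult_def)
    also have "\<dots> = (\<Sum>j\<in>UNIV. if j = i then c * x $ j else 0)"
      by (rule sum.cong) (auto simp: mat_def)
    finally have "((mat c :: real^'n^'n) *v x) $ i = (\<Sum>j\<in>UNIV. if j = i then c * x $ j else 0)" .
    then show ?thesis by simp
  qed
  then show ?thesis by (simp add: vec_eq_iff)
qed

lemma pdc_mat: "0 < c \<Longrightarrow> pdc c (mat c :: real^'n^'n)"
  unfolding pdc_def qf_def mat_mv
  by (simp add: symm_def transpose_def mat_def vec_eq_iff)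

lemma det_mat: "det (mat c :: real^'n^'n) = c ^ CARD('n)"
  by (subst det_diagonal) (auto simp: mat_def)

lemma ln1_ge: "0 \<le> x \<Longrightarrow> x \<le> 1 \<Longrightarrow> x / 2 \<le> ln (1 + (x::real))"
proof -
  assume x0: "0 \<le> x" and x1: "x \<le> 1"
  have "ln (1 / (1 + x)) \<le> 1 / (1 + x) - 1" by (rule ln_le_minus_one) (use x0 in simp)
  then have "x / (1 + x) \<le> ln (1 + x)" using x0 by (simp add: ln_div field_simps)
  moreover have "x / 2 \<le> x / (1 + x)" by (rule divide_left_mono) (use x0 x1 in auto)
  ultimately show ?thesis by linarith
qed

locale L19 =
  fixes R :: "'s::finite \<Rightarrow> 'a::finite \<Rightarrow> 's set"
    and \<phi> :: "'s \<Rightarrow> 'a \<Rightarrow> 's \<Rightarrow> real^'d::finite"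
    and \<theta>star :: "real^'d"
    and L\<phi> L\<theta> \<kappa> lam \<eta> :: real
    and \<beta> :: "nat \<Rightarrow> real"
    and s :: "nat \<Rightarrow> 's" and a :: "nat \<Rightarrow> 'a"
    and th :: "nat \<Rightarrow> real^'d" and Sig :: "nat \<Rightarrow> real^'d^'d"
    and T :: nat
  assumes A1_phi: "\<forall>x y. \<forall>z\<in>R x y. norm (\<phi> x y z) \<le> L\<phi>"
    and A1_theta: "norm \<theta>star \<le> L\<theta>"
    and A2_kappa: "0 < \<kappa>" "\<kappa> < 1"
    and A2: "\<forall>t\<in>{1..T}. \<forall>\<theta>. norm \<theta> \<le> L\<theta> \<longrightarrow>
               (\<forall>s'\<in>R (s t) (a t). \<forall>s''\<in>R (s t) (a t).
                  \<kappa> \<le> mnl_prob R \<phi> \<theta> (s t) (a t) s' * mnl_prob R \<phi> \<theta> (s t) (a t) s'')"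
    and A3: "\<forall>x y. \<exists>z\<in>R x y. \<phi> x y z = 0"
    and eta_pos: "0 < \<eta>"
    and lam_pos: "0 < lam"
    and lam_ge: "L\<phi>\<^sup>2 \<le> lam"
    and init_th: "th 1 = 0"
    and init_Sig: "Sig 1 = mat lam"
    and omd_step: "\<forall>t. 1 \<le> t \<and> t < T \<longrightarrow> norm (th (Suc t)) \<le> L\<theta> \<and>
                    (\<forall>\<theta>. norm \<theta> \<le> L\<theta> \<longrightarrow>
                        omd_obj R \<phi> \<eta> s a th Sig t (th (Suc t)) \<le> omd_obj R \<phi> \<eta> s a th Sig t \<theta>)"
    and Sig_step: "\<forall>t. 1 \<le> t \<and> t < T \<longrightarrow>
                    Sig (Suc t) = Sig t + mnl_hess R \<phi> (th (Suc t)) (s t) (a t)"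
    and beta_pos: "\<forall>t. 0 < \<beta> t"
    and beta_mono: "mono \<beta>"
    and conf: "\<forall>t\<in>{1..T}. wnorm (Sig t) (th t - \<theta>star) \<le> \<beta> t"
    and T1: "1 \<le> T"
begin

lemma fin: "finite (R x y)" by simp

lemma ne: "R x y \<noteq> {}" using A3 by blast

lemma p0: "0 \<le> mnl_prob R \<phi> \<theta> x y i"
  using mp_pos[of R x y, OF fin ne] less_imp_le by blast

lemma sp: "(\<Sum>i\<in>R x y. mnl_prob R \<phi> \<theta> x y i) = 1"
  by (rule mp_sum[of R x y, OF fin ne])

lemma Lphi0: "0 \<le> L\<phi>"
proof -
  obtain z where "z \<in> R x y" using ne by blast
  then show ?thesis using A1_phi by (meson norm_ge_zero order_trans)
qed

definition th' :: "nat \<Rightarrow> real^'d" where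
  "th' t = (if t < T then th (Suc t) else th T)"

definition G :: "nat \<Rightarrow> real^'d^'d" where
  "G t = (if t \<le> T then Sig t else Sig T + mnl_hess R \<phi> (th T) (s T) (a T))"

definition xx :: "nat \<Rightarrow> real" where
  "xx t = (\<Sum>i\<in>R (s t) (a t). mnl_prob R \<phi> (th' t) (s t) (a t) i
            * qf (matrix_inv (G t)) (\<phi> (s t) (a t) i - mean_feat R \<phi> (th' t) (s t) (a t)))"

lemma th'_norm: "1 \<le> t \<Longrightarrow> t \<le> T \<Longrightarrow> norm (th' t) \<le> L\<theta>"
proof -
  assume t: "1 \<le> t" "t \<le> T"
  show ?thesis
  proof (cases "t < T")
    case True then show ?thesis using omd_step t by (simp add: th'_def)
  next
    case False
    then have tT: "t = T" using t by simp
    show ?thesis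
    proof (cases "T = 1")
      case True
      have "th' t = th T" using tT by (simp add: th'_def)
      then show ?thesis using True init_th A1_theta order_trans[OF norm_ge_zero] by simp
    next
      case False
      then have "1 \<le> T - 1" "T - 1 < T" using T1 by auto
      then have "norm (th (Suc (T - 1))) \<le> L\<theta>" using omd_step by blast
      then show ?thesis using tT T1 by (simp add: th'_def)
    qed
  qed
qed

lemma G_step: "1 \<le> t \<Longrightarrow> t \<le> T \<Longrightarrow> G (Suc t) = G t + mnl_hess R \<phi> (th' t) (s t) (a t)"
proof -
  assume t: "1 \<le> t" "t \<le> T"
  show ?thesis
  proof (cases "t < T")
    case True then show ?thesis using Sig_step t by (simp add: G_def th'_def)
  next
    case False then have "t = T" using t by simp
    then show ?thesis by (simp add: G_def th'_def)
  qed
qed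

lemma G_hess: "1 \<le> t \<Longrightarrow> t \<le> T \<Longrightarrow>
   G (Suc t) = G t + (\<Sum>i\<in>R (s t) (a t). outer (vv R \<phi> (th' t) (s t) (a t) i) (vv R \<phi> (th' t) (s t) (a t) i))"
  using G_step hess_decomp[of R "s t" "a t", OF fin ne] by simp

lemma G_main:
  assumes "1 \<le> t" "t \<le> Suc T"
  shows "pdc lam (G t) \<and> 0 < det (G t)
     \<and> lam ^ CARD('d) * (\<Prod>\<tau>\<in>{1..<t}. (1 + xx \<tau>)) \<le> det (G t)
     \<and> trace (G t) \<le> real CARD('d) * lam + real (t - 1) * L\<phi>^2"
  using assms
proof (induction t rule: dec_induct)
  case base
  have G1: "G 1 = mat lam" using T1 init_Sig by (simp add: G_def)
  have "pdc lam (G 1)" unfolding G1 by (rule pdc_mat[OF lam_pos])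
  moreover have "det (G 1) = lam ^ CARD('d)" unfolding G1 by (rule det_mat)
  moreover have "trace (G 1) = real CARD('d) * lam" unfolding G1 by (simp add: trace_def mat_def)
  ultimately show ?case using lam_pos by simp
next
  case (step t)
  have t: "1 \<le> t" "t \<le> T" using step by auto
  have IH: "pdc lam (G t)" "0 < det (G t)"
     "lam ^ CARD('d) * (\<Prod>\<tau>\<in>{1..<t}. (1 + xx \<tau>)) \<le> det (G t)"
     "trace (G t) \<le> real CARD('d) * lam + real (t - 1) * L\<phi>^2"
    using step by auto
  let ?v = "vv R \<phi> (th' t) (s t) (a t)"
  have ch: "pdc lam (G t + (\<Sum>j\<in>R (s t) (a t). outer (?v j) (?v j)))
    \<and> det (G t) * (1 + (\<Sum>j\<in>R (s t) (a t). qf (matrix_inv (G t)) (?v j))) \<le> det (G t + (\<Sum>j\<in>R (s t) (a t). outer (?v j) (?v j)))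
    \<and> (\<forall>x. det (G t) * qf (matrix_inv (G t)) x \<le> det (G t + (\<Sum>j\<in>R (s t) (a t). outer (?v j) (?v j))) * qf (matrix_inv (G t + (\<Sum>j\<in>R (s t) (a t). outer (?v j) (?v j)))) x)"
    by (rule rank1_chain[OF IH(1,2) fin])
  have xxe: "(\<Sum>j\<in>R (s t) (a t). qf (matrix_inv (G t)) (?v j)) = xx t"
    unfolding xx_def by (simp only: qf_vv)
  have Gs: "G (Suc t) = G t + (\<Sum>j\<in>R (s t) (a t). outer (?v j) (?v j))" by (rule G_hess[OF t])
  have x0: "0 \<le> xx t" unfolding xxe[symmetric] by (rule sum_nonneg) (rule qf_inv_nonneg[OF IH(1)])
  have d1: "det (G t) * (1 + xx t) \<le> det (G (Suc t))" using ch xxe Gs by simp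
  have "lam ^ CARD('d) * (\<Prod>\<tau>\<in>{1..<Suc t}. (1 + xx \<tau>)) = (lam ^ CARD('d) * (\<Prod>\<tau>\<in>{1..<t}. (1 + xx \<tau>))) * (1 + xx t)"
    using t by (simp add: prod.atLeastLessThan_Suc)
  also have "\<dots> \<le> det (G t) * (1 + xx t)" by (rule mult_right_mono[OF IH(3)]) (use x0 in simp)
  also have "\<dots> \<le> det (G (Suc t))" by (rule d1)
  finally have P3: "lam ^ CARD('d) * (\<Prod>\<tau>\<in>{1..<Suc t}. (1 + xx \<tau>)) \<le> det (G (Suc t))" .
  have P2: "0 < det (G (Suc t))" using d1 IH(2) x0
    by (smt (verit) mult_pos_pos)
  have "trace (G (Suc t)) = trace (G t) + trace (mnl_hess R \<phi> (th' t) (s t) (a t))"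
    using G_step[OF t] by (simp add: trace_add)
  also have "\<dots> \<le> real CARD('d) * lam + real (t - 1) * L\<phi>^2 + L\<phi>^2"
    using IH(4) trace_hess[of R "s t" "a t", OF fin ne] A1_phi by (smt (verit))
  also have "\<dots> = real CARD('d) * lam + real (Suc t - 1) * L\<phi>^2"
    using t by (simp add: algebra_simps of_nat_diff)
  finally have P4: "trace (G (Suc t)) \<le> real CARD('d) * lam + real (Suc t - 1) * L\<phi>^2" .
  show ?case using P2 P3 P4 ch Gs by simp
qed

lemma xx_bounds:
  assumes "1 \<le> t" "t \<le> T"
  shows "0 \<le> xx t \<and> xx t \<le> 1"
proof -
  have pd: "pdc lam (G t)" using G_main[of t] assms by simp
  let ?p = "\<lambda>i. mnl_prob R \<phi> (th' t) (s t) (a t) i"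
  let ?A = "matrix_inv (G t)"
  have "xx t \<le> (\<Sum>i\<in>R (s t) (a t). ?p i * qf ?A (\<phi> (s t) (a t) i))"
    unfolding xx_def mean_feat_def by (rule var_le[OF pdc_psym_inv[OF pd] sp])
  also have "\<dots> \<le> (\<Sum>i\<in>R (s t) (a t). ?p i * (L\<phi>^2 / lam))"
  proof (rule sum_mono, rule mult_left_mono)
    fix i assume i: "i \<in> R (s t) (a t)"
    have "qf ?A (\<phi> (s t) (a t) i) \<le> (\<phi> (s t) (a t) i \<bullet> \<phi> (s t) (a t) i) / lam" by (rule qf_inv_le[OF pd])
    also have "\<phi> (s t) (a t) i \<bullet> \<phi> (s t) (a t) i = (norm (\<phi> (s t) (a t) i))^2" by (simp add: power2_norm_eq_inner)
    also have "(norm (\<phi> (s t) (a t) i))^2 \<le> L\<phi>^2" using A1_phi i by (simp add: power_mono)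
    finally show "qf ?A (\<phi> (s t) (a t) i) \<le> L\<phi>^2 / lam" using lam_pos by (simp add: divide_right_mono)
  qed (rule p0)
  also have "\<dots> = L\<phi>^2 / lam" by (simp only: sum_distrib_right[symmetric] sp mult_1_left)
  also have "\<dots> \<le> 1" using lam_ge lam_pos by simp
  finally have "xx t \<le> 1" .
  moreover have "0 \<le> xx t" unfolding xx_def
    by (rule sum_nonneg) (use p0 qf_inv_nonneg[OF pd] in simp)
  ultimately show ?thesis by simp
qed

end


context L19 begin

lemma G_Sig: "t \<le> T \<Longrightarrow> G t = Sig t" by (simp add: G_def)

lemma pdc_Sig: "1 \<le> t \<Longrightarrow> t \<le> T \<Longrightarrow> pdc lam (Sig t) \<and> 0 < det (Sig t)"
  using G_main[of t] G_Sig[of t] by simp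

lemma U_ge1: "1 \<le> real (Max (range (\<lambda>(x, y). card (R x y))))"
proof -
  obtain x :: 's and y :: 'a where True by blast
  have "card (R x y) \<in> range (\<lambda>(x, y). card (R x y))" by (auto intro: image_eqI[of _ _ "(x, y)"])
  moreover have "finite (range (\<lambda>(x, y). card (R x y)))" by simp
  ultimately have "card (R x y) \<le> Max (range (\<lambda>(x, y). card (R x y)))" by (rule Max_ge[rotated])
  moreover have "1 \<le> card (R x y)" using ne[of x y] fin[of x y] by (simp add: Suc_leI card_gt_0_iff)
  ultimately show ?thesis by simp
qed

lemma xx_sum:
  "(\<Sum>t\<in>{1..T}. xx t) \<le> 2 * real CARD('d) * ln (1 + real T * real (Max (range (\<lambda>(x, y). card (R x y)))) * L\<phi>\<^sup>2 / (lam * real CARD('d)))"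
proof -
  let ?d = "real CARD('d)"
  let ?U = "real (Max (range (\<lambda>(x, y). card (R x y))))"
  have GM: "pdc lam (G (Suc T))" "0 < det (G (Suc T))"
    "lam ^ CARD('d) * (\<Prod>\<tau>\<in>{1..<Suc T}. (1 + xx \<tau>)) \<le> det (G (Suc T))"
    "trace (G (Suc T)) \<le> ?d * lam + real T * L\<phi>^2"
    using G_main[of "Suc T"] by auto
  have pd: "pd (G (Suc T))" by (rule pdc_pd[OF GM(1)])
  have xb: "\<And>t. t \<in> {1..T} \<Longrightarrow> 0 \<le> xx t \<and> xx t \<le> 1" using xx_bounds by auto
  have d0: "0 < ?d" by simp
  have tr0: "0 < trace (G (Suc T))"
  proof -
    have "0 < (\<Sum>i\<in>UNIV. G (Suc T) $ i $ i)" by (rule sum_pos) (use pd_diag[OF pd] in auto)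
    then show ?thesis by (simp add: trace_def)
  qed
  have prod0: "0 < (\<Prod>\<tau>\<in>{1..<Suc T}. (1 + xx \<tau>))"
  proof (rule prod_pos)
    fix t assume "t \<in> {1..<Suc T}"
    then have "0 \<le> xx t" using xb by auto
    then show "0 < 1 + xx t" by simp
  qed
  have "ln (lam ^ CARD('d) * (\<Prod>\<tau>\<in>{1..<Suc T}. (1 + xx \<tau>))) \<le> ln (det (G (Suc T)))"
    using GM(3) lam_pos prod0 by (simp add: ln_mono)
  also have "\<dots> \<le> ?d * ln (trace (G (Suc T)) / ?d)" by (rule ln_det_le[OF pd GM(2)])
  also have "\<dots> \<le> ?d * ln ((?d * lam + real T * L\<phi>^2) / ?d)"
    using GM(4) tr0 d0 by (simp add: divide_right_mono ln_mono)
  finally have A: "ln (lam ^ CARD('d) * (\<Prod>\<tau>\<in>{1..<Suc T}. (1 + xx \<tau>))) \<le> ?d * ln ((?d * lam + real T * L\<phi>^2) / ?d)" .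
  have "ln (lam ^ CARD('d) * (\<Prod>\<tau>\<in>{1..<Suc T}. (1 + xx \<tau>))) = ?d * ln lam + (\<Sum>\<tau>\<in>{1..T}. ln (1 + xx \<tau>))"
  proof -
    have "ln (lam ^ CARD('d) * (\<Prod>\<tau>\<in>{1..<Suc T}. (1 + xx \<tau>))) = ln (lam ^ CARD('d)) + ln (\<Prod>\<tau>\<in>{1..<Suc T}. (1 + xx \<tau>))"
      by (rule ln_mult_pos) (use lam_pos prod0 in auto)
    moreover have "ln (lam ^ CARD('d)) = ?d * ln lam" by (rule ln_realpow)
    moreover have "ln (\<Prod>\<tau>\<in>{1..<Suc T}. (1 + xx \<tau>)) = (\<Sum>\<tau>\<in>{1..<Suc T}. ln (1 + xx \<tau>))"
    proof (rule ln_prod)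
      fix t assume "t \<in> {1..<Suc T}"
      then have "0 \<le> xx t" using xb by auto
      then show "1 + xx t \<noteq> 0" by simp
    qed simp
    moreover have "(\<Sum>\<tau>\<in>{1..<Suc T}. ln (1 + xx \<tau>)) = (\<Sum>\<tau>\<in>{1..T}. ln (1 + xx \<tau>))"
      by (rule sum.cong) auto
    ultimately show ?thesis by linarith
  qed
  moreover have "ln ((?d * lam + real T * L\<phi>^2) / ?d) = ln lam + ln (1 + real T * L\<phi>^2 / (lam * ?d))"
  proof -
    have "(?d * lam + real T * L\<phi>^2) / ?d = lam * (1 + real T * L\<phi>^2 / (lam * ?d))"
      using d0 lam_pos by (simp add: field_simps)
    moreover have "0 < 1 + real T * L\<phi>^2 / (lam * ?d)" using d0 lam_pos by (simp add: add_pos_nonneg)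
    ultimately show ?thesis using lam_pos by (simp add: ln_mult_pos)
  qed
  ultimately have B: "(\<Sum>\<tau>\<in>{1..T}. ln (1 + xx \<tau>)) \<le> ?d * ln (1 + real T * L\<phi>^2 / (lam * ?d))"
    using A by (simp add: algebra_simps)
  have "ln (1 + real T * L\<phi>^2 / (lam * ?d)) \<le> ln (1 + real T * ?U * L\<phi>^2 / (lam * ?d))"
  proof (rule ln_mono)
    have h: "(real T * L\<phi>^2) * 1 \<le> (real T * L\<phi>^2) * ?U"
      using U_ge1 by (intro mult_left_mono) auto
    have e: "real T * ?U * L\<phi>^2 = (real T * L\<phi>^2) * ?U" by (simp only: mult.assoc mult.commute[of "?U"])
    have "real T * L\<phi>^2 \<le> real T * ?U * L\<phi>^2" unfolding e using h by simp
    then show "1 + real T * L\<phi>^2 / (lam * ?d) \<le> 1 + real T * ?U * L\<phi>^2 / (lam * ?d)"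
      using d0 lam_pos by (simp add: divide_right_mono)
    show "0 < 1 + real T * L\<phi>^2 / (lam * ?d)" using d0 lam_pos by (simp add: add_pos_nonneg)
  qed
  then have C: "(\<Sum>\<tau>\<in>{1..T}. ln (1 + xx \<tau>)) \<le> ?d * ln (1 + real T * ?U * L\<phi>^2 / (lam * ?d))"
    using B d0 by (smt (verit) mult_left_mono)
  have "(\<Sum>t\<in>{1..T}. xx t) = 2 * (\<Sum>t\<in>{1..T}. xx t / 2)" by (simp add: sum_divide_distrib[symmetric])
  also have "\<dots> \<le> 2 * (\<Sum>t\<in>{1..T}. ln (1 + xx t))"
    by (simp, rule sum_mono) (use xb ln1_ge in auto)
  also have "\<dots> \<le> 2 * (?d * ln (1 + real T * ?U * L\<phi>^2 / (lam * ?d)))" using C by simp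
  finally show ?thesis by simp
qed

lemma Sig_chain:
  assumes "1 \<le> tk" "tk \<le> t" "t \<le> T"
  shows "det (Sig tk) * qf (matrix_inv (Sig tk)) z \<le> det (Sig t) * qf (matrix_inv (Sig t)) z"
  using assms(2,3)
proof (induction t rule: dec_induct)
  case base then show ?case by simp
next
  case (step t)
  have t: "1 \<le> t" "t \<le> T" using step assms by auto
  have pd: "pdc lam (G t)" "0 < det (G t)" using G_main[of t] t by auto
  let ?v = "vv R \<phi> (th' t) (s t) (a t)"
  have ch: "\<forall>x. det (G t) * qf (matrix_inv (G t)) x \<le> det (G t + (\<Sum>j\<in>R (s t) (a t). outer (?v j) (?v j))) * qf (matrix_inv (G t + (\<Sum>j\<in>R (s t) (a t). outer (?v j) (?v j)))) x"
    using rank1_chain[OF pd fin, of ?v] by blast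
  have "G (Suc t) = G t + (\<Sum>j\<in>R (s t) (a t). outer (?v j) (?v j))" by (rule G_hess[OF t])
  then have "det (G t) * qf (matrix_inv (G t)) z \<le> det (G (Suc t)) * qf (matrix_inv (G (Suc t))) z"
    using ch by simp
  then show ?case using step G_Sig t by simp
qed

lemma Sig_inv_mono:
  assumes "1 \<le> t" "t < T"
  shows "qf (matrix_inv (Sig (Suc t))) z \<le> qf (matrix_inv (Sig t)) z"
proof -
  have t: "1 \<le> t" "t \<le> T" using assms by auto
  have pd1: "pdc lam (Sig t)" using pdc_Sig t by blast
  have pd2: "pdc lam (Sig (Suc t))" using pdc_Sig assms by simp
  let ?v = "vv R \<phi> (th' t) (s t) (a t)"
  have "Sig (Suc t) = Sig t + (\<Sum>j\<in>R (s t) (a t). outer (?v j) (?v j))"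
    using G_hess[OF t] G_Sig t assms by simp
  then have "qf (Sig t) y \<le> qf (Sig (Suc t)) y" for y
    by (simp add: qf_sum_outer sum_nonneg)
  then show ?thesis by (rule inv_mono[OF pd1 pd2])
qed

end


context L19 begin

lemma per_t:
  assumes tk1: "1 \<le> tk" and tkt: "tk \<le> t" and tT: "t \<le> T" and dt: "det (Sig t) \<le> 2 * det (Sig tk)"
  shows "bonus1 R \<phi> \<beta> th Sig tk (s t) (a t)
     \<le> \<beta> T * (sqrt 2 * sqrt (xx t) + (4 * sqrt 2 * (1 + sqrt 2)) * \<beta> T * xx t / \<kappa>)"
proof -
  let ?X = "R (s t) (a t)"
  let ?f = "\<phi> (s t) (a t)"
  let ?Ak = "matrix_inv (Sig tk)" and ?At = "matrix_inv (Sig t)"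
  let ?p = "\<lambda>i. mnl_prob R \<phi> (th tk) (s t) (a t) i"
  let ?p' = "\<lambda>i. mnl_prob R \<phi> (th' t) (s t) (a t) i"
  let ?E = "mean_feat R \<phi> (th tk) (s t) (a t)"
  let ?E' = "mean_feat R \<phi> (th' t) (s t) (a t)"
  have finX: "finite ?X" by (rule fin)
  have neX: "?X \<noteq> {}" by (rule ne)
  have p0k: "\<And>i. 0 \<le> ?p i" by (rule p0)
  have p0k': "\<And>i. 0 \<le> ?p' i" by (rule p0)
  have spk: "(\<Sum>i\<in>?X. ?p i) = 1" by (rule sp)
  have spk': "(\<Sum>i\<in>?X. ?p' i) = 1" by (rule sp)
  have t1: "1 \<le> t" using tk1 tkt by simp
  have tkT: "tk \<le> T" using tkt tT by simp
  have pk: "pdc lam (Sig tk)" "0 < det (Sig tk)" using pdc_Sig[OF tk1 tkT] by auto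
  have pt: "pdc lam (Sig t)" "0 < det (Sig t)" using pdc_Sig[OF t1 tT] by auto
  have psk: "psym ?Ak" by (rule pdc_psym_inv[OF pk(1)])
  have pst: "psym ?At" by (rule pdc_psym_inv[OF pt(1)])
  have bT: "\<beta> tk \<le> \<beta> T" using beta_mono tkT by (simp add: mono_def)
  have bpos: "\<And>t. 0 < \<beta> t" using beta_pos by blast
  have k0: "0 < \<kappa>" using A2_kappa by simp
  have r1: "qf ?Ak z \<le> 2 * qf ?At z" for z
  proof -
    have "det (Sig tk) * qf ?Ak z \<le> det (Sig t) * qf ?At z" by (rule Sig_chain[OF tk1 tkt tT])
    also have "\<dots> \<le> (2 * det (Sig tk)) * qf ?At z"
      by (rule mult_right_mono[OF dt]) (rule qf_inv_nonneg[OF pt(1)])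
    finally have "det (Sig tk) * qf ?Ak z \<le> det (Sig tk) * (2 * qf ?At z)" by (simp add: ac_simps)
    then show ?thesis using pk(2) by simp
  qed
  have r2: "wnorm ?Ak z \<le> sqrt 2 * wnorm ?At z" for z
    unfolding wnorm_qf using r1[of z] by (simp add: real_sqrt_mult[symmetric])
  define Mb where "Mb = sqrt (xx t / \<kappa>)"
  have xt: "0 \<le> xx t" "xx t \<le> 1" using xx_bounds[OF t1 tT] by auto
  have Mb0: "0 \<le> Mb" unfolding Mb_def using xt k0 by simp
  have Mb2: "Mb^2 = xx t / \<kappa>" unfolding Mb_def using xt k0 by simp
  have xxe: "xx t = (\<Sum>i\<in>?X. ?p' i * qf ?At (?f i - (\<Sum>i\<in>?X. ?p' i *\<^sub>R ?f i)))"
    unfolding xx_def G_Sig[OF tT] mean_feat_def ..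
  have kb: "wnorm ?At (?f i) \<le> Mb" if i: "i \<in> ?X" for i
  proof -
    obtain z where z: "z \<in> ?X" "?f z = 0" using A3 by blast
    have "\<kappa> \<le> ?p' i * ?p' z" using A2 t1 tT th'_norm[OF t1 tT] i z(1) by auto
    then have "\<kappa> * qf ?At (?f i) \<le> xx t"
      unfolding xxe by (rule kappa_bound[where \<phi>="\<phi> (s t) (a t)", OF pst finX p0k' spk' i z(1) z(2) k0])
    then have "qf ?At (?f i) \<le> xx t / \<kappa>" using k0 by (simp add: pos_le_divide_eq mult.commute)
    then show ?thesis unfolding wnorm_qf Mb_def by simp
  qed
  define t' where "t' = (if t < T then Suc t else T)"
  have t'1: "1 \<le> t'" "t' \<le> T" using t1 tT unfolding t'_def by auto
  have tht': "th' t = th t'" unfolding t'_def th'_def by simp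
  have pt': "pdc lam (Sig t')" using pdc_Sig[OF t'1] by simp
  have mono_t': "wnorm (matrix_inv (Sig t')) v \<le> wnorm ?At v" for v
  proof (cases "t < T")
    case True
    then show ?thesis unfolding t'_def wnorm_qf using Sig_inv_mono[OF t1 True] by simp
  next
    case False
    then have "t = T" using tT by simp
    then show ?thesis unfolding t'_def by simp
  qed
  define ep where "ep = (1 + sqrt 2) * \<beta> T * Mb"
  have logit: "\<bar>?f i \<bullet> th tk - ?f i \<bullet> th' t\<bar> \<le> ep" if i: "i \<in> ?X" for i
  proof -
    have "?f i \<bullet> th tk - ?f i \<bullet> th' t = ?f i \<bullet> (th tk - \<theta>star) + ?f i \<bullet> (\<theta>star - th t')"
      unfolding tht' by (simp add: inner_diff_right)
    then have "\<bar>?f i \<bullet> th tk - ?f i \<bullet> th' t\<bar> \<le> \<bar>?f i \<bullet> (th tk - \<theta>star)\<bar> + \<bar>?f i \<bullet> (\<theta>star - th t')\<bar>"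
      by linarith
    also have "\<bar>?f i \<bullet> (th tk - \<theta>star)\<bar> \<le> (sqrt 2 * Mb) * \<beta> T"
    proof -
      have "\<bar>?f i \<bullet> (th tk - \<theta>star)\<bar> \<le> wnorm ?Ak (?f i) * wnorm (Sig tk) (th tk - \<theta>star)"
        by (rule cs_vec[OF pk(1)])
      also have "\<dots> \<le> (sqrt 2 * Mb) * \<beta> T"
      proof (rule mult_mono)
        show "wnorm ?Ak (?f i) \<le> sqrt 2 * Mb" using r2[of "?f i"] kb[OF i] by (smt (verit) mult_left_mono real_sqrt_ge_zero)
        show "wnorm (Sig tk) (th tk - \<theta>star) \<le> \<beta> T" using conf tk1 tkT bT by force
        show "0 \<le> sqrt 2 * Mb" using Mb0 by simp
        show "0 \<le> wnorm (Sig tk) (th tk - \<theta>star)" by (rule wn_nonneg[OF pdc_psym[OF pk(1)]])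
      qed
      finally show ?thesis .
    qed
    also have "\<bar>?f i \<bullet> (\<theta>star - th t')\<bar> \<le> Mb * \<beta> T"
    proof -
      have "\<bar>?f i \<bullet> (\<theta>star - th t')\<bar> \<le> wnorm (matrix_inv (Sig t')) (?f i) * wnorm (Sig t') (\<theta>star - th t')"
        by (rule cs_vec[OF pt'])
      also have "\<dots> \<le> Mb * \<beta> T"
      proof (rule mult_mono)
        show "wnorm (matrix_inv (Sig t')) (?f i) \<le> Mb" using mono_t'[of "?f i"] kb[OF i] by simp
        have "\<beta> t' \<le> \<beta> T" using beta_mono t'1 by (simp add: mono_def)
        then show "wnorm (Sig t') (\<theta>star - th t') \<le> \<beta> T"
          using conf t'1 wn_diff_comm[of "Sig t'" "\<theta>star" "th t'"] by force
        show "0 \<le> Mb" by (rule Mb0)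
        show "0 \<le> wnorm (Sig t') (\<theta>star - th t')" by (rule wn_nonneg[OF pdc_psym[OF pt']])
      qed
      finally show ?thesis .
    qed
    finally show ?thesis unfolding ep_def by (simp add: algebra_simps)
  qed
  have tv: "(\<Sum>i\<in>?X. \<bar>?p i - ?p' i\<bar>) \<le> 2 * ep"
    by (rule mnl_tv[of R "s t" "a t", OF finX neX]) (rule logit)
  have fc: "(\<Sum>i\<in>?X. ?p i * wnorm ?At (?f i - (\<Sum>i\<in>?X. ?p i *\<^sub>R ?f i)))
     \<le> (\<Sum>i\<in>?X. ?p' i * wnorm ?At (?f i - (\<Sum>i\<in>?X. ?p' i *\<^sub>R ?f i))) + 2 * Mb * (\<Sum>i\<in>?X. \<bar>?p i - ?p' i\<bar>)"
    by (rule f_compare[where \<phi>="\<phi> (s t) (a t)", OF pst finX p0k spk p0k' spk' kb])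
  have js: "(\<Sum>i\<in>?X. ?p' i * wnorm ?At (?f i - (\<Sum>i\<in>?X. ?p' i *\<^sub>R ?f i))) \<le> sqrt (xx t)"
    unfolding wnorm_qf xxe
    by (rule jensen_sqrt) (use p0k' spk' pst in \<open>auto simp: psym_def\<close>)
  have main: "(\<Sum>i\<in>?X. ?p i * wnorm ?At (?f i - ?E)) \<le> sqrt (xx t) + 4 * (1 + sqrt 2) * \<beta> T * (xx t / \<kappa>)"
  proof -
    have "2 * Mb * (\<Sum>i\<in>?X. \<bar>?p i - ?p' i\<bar>) \<le> 2 * Mb * (2 * ep)"
      by (rule mult_left_mono[OF tv]) (use Mb0 in simp)
    also have "\<dots> = 4 * (1 + sqrt 2) * \<beta> T * Mb^2" unfolding ep_def by (simp add: power2_eq_square)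
    finally show ?thesis using fc js unfolding Mb2 mean_feat_def by linarith
  qed
  have "bonus1 R \<phi> \<beta> th Sig tk (s t) (a t) = \<beta> tk * (\<Sum>i\<in>?X. ?p i * wnorm ?Ak (?f i - ?E))"
    by (simp add: bonus1_def)
  also have "\<dots> \<le> \<beta> tk * (\<Sum>i\<in>?X. ?p i * (sqrt 2 * wnorm ?At (?f i - ?E)))"
    by (rule mult_left_mono, rule sum_mono, rule mult_left_mono) (use r2 p0k bpos in \<open>auto intro: less_imp_le\<close>)
  also have "\<dots> = \<beta> tk * sqrt 2 * (\<Sum>i\<in>?X. ?p i * wnorm ?At (?f i - ?E))"
    by (simp add: sum_distrib_left ac_simps)
  also have "\<dots> \<le> \<beta> tk * sqrt 2 * (sqrt (xx t) + 4 * (1 + sqrt 2) * \<beta> T * (xx t / \<kappa>))"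
    by (rule mult_left_mono[OF main]) (use bpos in \<open>auto intro: less_imp_le\<close>)
  also have "\<dots> \<le> \<beta> T * sqrt 2 * (sqrt (xx t) + 4 * (1 + sqrt 2) * \<beta> T * (xx t / \<kappa>))"
  proof (rule mult_right_mono)
    show "\<beta> tk * sqrt 2 \<le> \<beta> T * sqrt 2" using bT by simp
    show "0 \<le> sqrt (xx t) + 4 * (1 + sqrt 2) * \<beta> T * (xx t / \<kappa>)"
      using xt k0 bpos[of T] by (simp add: less_imp_le)
  qed
  also have "\<dots> = \<beta> T * (sqrt 2 * sqrt (xx t) + (4 * sqrt 2 * (1 + sqrt 2)) * \<beta> T * xx t / \<kappa>)"
    using k0 by (simp add: field_simps)
  finally show ?thesis .
qed

end


lemma ns_gt:
  assumes "tk \<le> T"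
  shows "tk < next_start Sig T tk"
proof (cases "\<exists>t. tk < t \<and> t \<le> T \<and> det (Sig t) > 2 * det (Sig tk)")
  case True
  then have "tk < (LEAST t. tk < t \<and> t \<le> T \<and> det (Sig t) > 2 * det (Sig tk))"
    by (metis (mono_tags, lifting) LeastI_ex)
  moreover have "next_start Sig T tk = (LEAST t. tk < t \<and> t \<le> T \<and> det (Sig t) > 2 * det (Sig tk))"
    unfolding next_start_def using True by (rule if_P)
  ultimately show ?thesis by simp
next
  case False
  have "next_start Sig T tk = T + 1" unfolding next_start_def using False by (rule if_not_P)
  then show ?thesis using assms by simp
qed

lemma ns_le: "next_start Sig T tk \<le> Suc T"
proof (cases "\<exists>t. tk < t \<and> t \<le> T \<and> det (Sig t) > 2 * det (Sig tk)")
  case True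
  then obtain t where t: "tk < t \<and> t \<le> T \<and> det (Sig t) > 2 * det (Sig tk)" by blast
  then have "(LEAST t. tk < t \<and> t \<le> T \<and> det (Sig t) > 2 * det (Sig tk)) \<le> t"
    by (rule Least_le)
  moreover have "next_start Sig T tk = (LEAST t. tk < t \<and> t \<le> T \<and> det (Sig t) > 2 * det (Sig tk))"
    unfolding next_start_def using True by (rule if_P)
  ultimately show ?thesis using t by simp
next
  case False
  have "next_start Sig T tk = T + 1" unfolding next_start_def using False by (rule if_not_P)
  then show ?thesis by simp
qed

lemma ns_big: "T < tk \<Longrightarrow> next_start Sig T tk = Suc T"
  by (auto simp: next_start_def)

lemma es_Suc: "1 \<le> k \<Longrightarrow> ep_start Sig T (Suc k) = next_start Sig T (ep_start Sig T k)"
proof -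
  assume "1 \<le> k"
  then obtain j where "k = Suc j" by (cases k) auto
  then show ?thesis by (simp add: ep_start_def)
qed

lemma es_1: "ep_start Sig T 1 = 1" by (simp add: ep_start_def)

lemma es_1': "ep_start Sig T (Suc 0) = 1" by (simp add: ep_start_def)

lemma es_ge1: "1 \<le> ep_start Sig T k"
proof (cases k)
  case 0 then show ?thesis by (simp add: ep_start_def)
next
  case (Suc j)
  then show ?thesis
  proof (cases j)
    case 0 then show ?thesis using Suc by (simp add: ep_start_def)
  next
    case (Suc i)
    then have "ep_start Sig T k = next_start Sig T (ep_start Sig T j)"
      using \<open>k = Suc j\<close> es_Suc[of j Sig T] by simp
    moreover have "1 \<le> next_start Sig T (ep_start Sig T j)"
    proof (cases "ep_start Sig T j \<le> T")
      case True then show ?thesis using ns_gt[of "ep_start Sig T j" T Sig, OF True] by simp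
    next
      case False then show ?thesis using ns_big[of T "ep_start Sig T j" Sig] by simp
    qed
    ultimately show ?thesis by simp
  qed
qed

lemma es_le: "1 \<le> k \<Longrightarrow> ep_start Sig T k \<le> Suc T"
proof -
  assume k: "1 \<le> k"
  show ?thesis
  proof (cases "k = 1")
    case True then show ?thesis by (simp add: es_1')
  next
    case False
    then obtain j where "k = Suc j" "1 \<le> j" using k by (cases k) auto
    then show ?thesis using es_Suc[of j Sig T] ns_le by simp
  qed
qed

lemma es_mono: "1 \<le> k \<Longrightarrow> ep_start Sig T k \<le> ep_start Sig T (Suc k)"
proof -
  assume k: "1 \<le> k"
  have e: "ep_start Sig T (Suc k) = next_start Sig T (ep_start Sig T k)" by (rule es_Suc[OF k])
  show ?thesis
  proof (cases "ep_start Sig T k \<le> T")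
    case True then show ?thesis using e ns_gt[of "ep_start Sig T k" T Sig, OF True] by simp
  next
    case False
    then have "T < ep_start Sig T k" by simp
    then have "ep_start Sig T (Suc k) = Suc T" using e ns_big[of T "ep_start Sig T k" Sig] by simp
    then show ?thesis using es_le[OF k] by simp
  qed
qed

lemma in_ep:
  assumes k: "1 \<le> k" and t1: "ep_start Sig T k \<le> t" and t2: "t < ep_start Sig T (Suc k)"
  shows "t \<le> T \<and> (ep_start Sig T k < t \<longrightarrow> det (Sig t) \<le> 2 * det (Sig (ep_start Sig T k)))"
proof -
  define tk where "tk = ep_start Sig T k"
  have e: "ep_start Sig T (Suc k) = next_start Sig T tk" unfolding tk_def by (rule es_Suc[OF k])
  let ?P = "\<lambda>t. tk < t \<and> t \<le> T \<and> det (Sig t) > 2 * det (Sig tk)"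
  show ?thesis
  proof (cases "\<exists>t. ?P t")
    case True
    then have ns: "next_start Sig T tk = (LEAST t. ?P t)" unfolding next_start_def by (rule if_P)
    obtain w where w: "?P w" using True by blast
    have "(LEAST t. ?P t) \<le> w" using w by (rule Least_le)
    then have tT: "t \<le> T" using t2 e ns w by simp
    have "t < (LEAST t. ?P t)" using t2 e ns by simp
    then have "\<not> ?P t" by (rule not_less_Least)
    then show ?thesis using tT unfolding tk_def by auto
  next
    case False
    then have "next_start Sig T tk = T + 1" unfolding next_start_def by (rule if_not_P)
    then have tT: "t \<le> T" using t2 e by simp
    then show ?thesis using False unfolding tk_def by auto
  qed
qed

lemma sum_eps:
  "(\<Sum>k = 1..K. \<Sum>t\<in>{ep_start Sig T k..<ep_start Sig T (Suc k)}. g t)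
    = (\<Sum>t\<in>{1..<ep_start Sig T (Suc K)}. (g t :: real))"
proof (induction K)
  case 0 then show ?case by (simp add: es_1')
next
  case (Suc K)
  have "(\<Sum>k = 1..Suc K. \<Sum>t\<in>{ep_start Sig T k..<ep_start Sig T (Suc k)}. g t)
      = (\<Sum>k = 1..K. \<Sum>t\<in>{ep_start Sig T k..<ep_start Sig T (Suc k)}. g t)
        + (\<Sum>t\<in>{ep_start Sig T (Suc K)..<ep_start Sig T (Suc (Suc K))}. g t)"
    by (simp add: sum.cl_ivl_Suc)
  also have "\<dots> = (\<Sum>t\<in>{1..<ep_start Sig T (Suc K)}. g t) + (\<Sum>t\<in>{ep_start Sig T (Suc K)..<ep_start Sig T (Suc (Suc K))}. g t)"
    using Suc by simp
  also have "\<dots> = (\<Sum>t\<in>{1..<ep_start Sig T (Suc (Suc K))}. g t)"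
    by (rule sum.atLeastLessThan_concat) (use es_ge1[of Sig T "Suc K"] es_mono[of "Suc K" Sig T] in auto)
  finally show ?case .
qed

context L19 begin

lemma main_bound:
  "(\<Sum>k = 1..num_episodes Sig T.
           \<Sum>t\<in>{ep_start Sig T k..<ep_start Sig T (Suc k)}.
              bonus1 R \<phi> \<beta> th Sig (ep_start Sig T k) (s t) (a t))
         \<le> \<beta> T * ((32 * \<beta> T / \<kappa> + 128 * sqrt 2 * L\<phi> * \<eta> / (\<kappa> * sqrt lam))
                    * real CARD('d)
                    * ln (1 + real T * real (Max (range (\<lambda>(x, y). card (R x y)))) * L\<phi>\<^sup>2
                              / (lam * real CARD('d)))
                  + 2 * sqrt (real CARD('d) * real T
                    * ln (1 + real T * real (Max (range (\<lambda>(x, y). card (R x y)))) * L\<phi>\<^sup>2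
                              / (lam * real CARD('d)))))"
proof -
  let ?K = "num_episodes Sig T"
  let ?d = "real CARD('d)"
  let ?l = "ln (1 + real T * real (Max (range (\<lambda>(x, y). card (R x y)))) * L\<phi>\<^sup>2 / (lam * real CARD('d)))"
  define c0 where "c0 = 4 * sqrt 2 * (1 + sqrt 2)"
  define g where "g t = \<beta> T * (sqrt 2 * sqrt (xx t) + c0 * \<beta> T * xx t / \<kappa>)" for t
  have k0: "0 < \<kappa>" using A2_kappa by simp
  have bT: "0 < \<beta> T" using beta_pos by blast
  have xb: "\<And>t. t \<in> {1..T} \<Longrightarrow> 0 \<le> xx t \<and> xx t \<le> 1" using xx_bounds by auto
  have g0: "\<And>t. t \<in> {1..T} \<Longrightarrow> 0 \<le> g t"
    unfolding g_def c0_def using xb k0 bT by (simp add: less_imp_le)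
  have step1: "(\<Sum>k = 1..?K. \<Sum>t\<in>{ep_start Sig T k..<ep_start Sig T (Suc k)}. bonus1 R \<phi> \<beta> th Sig (ep_start Sig T k) (s t) (a t))
      \<le> (\<Sum>k = 1..?K. \<Sum>t\<in>{ep_start Sig T k..<ep_start Sig T (Suc k)}. g t)"
  proof (rule sum_mono, rule sum_mono)
    fix k t assume k: "k \<in> {1..?K}" and t: "t \<in> {ep_start Sig T k..<ep_start Sig T (Suc k)}"
    have k1: "1 \<le> k" using k by simp
    have ie: "t \<le> T \<and> (ep_start Sig T k < t \<longrightarrow> det (Sig t) \<le> 2 * det (Sig (ep_start Sig T k)))"
      using in_ep[OF k1] t by auto
    have tk1: "1 \<le> ep_start Sig T k" by (rule es_ge1)
    have tkt: "ep_start Sig T k \<le> t" using t by simp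
    have dt: "det (Sig t) \<le> 2 * det (Sig (ep_start Sig T k))"
    proof (cases "ep_start Sig T k < t")
      case True then show ?thesis using ie by simp
    next
      case False
      then have "t = ep_start Sig T k" using tkt by simp
      moreover have "0 < det (Sig t)" using pdc_Sig[of t] tk1 tkt ie by simp
      ultimately show ?thesis by simp
    qed
    show "bonus1 R \<phi> \<beta> th Sig (ep_start Sig T k) (s t) (a t) \<le> g t"
      unfolding g_def c0_def by (rule per_t[OF tk1 tkt _ dt]) (use ie in simp)
  qed
  also have "\<dots> = (\<Sum>t\<in>{1..<ep_start Sig T (Suc ?K)}. g t)" by (rule sum_eps)
  also have "\<dots> \<le> (\<Sum>t\<in>{1..T}. g t)"
  proof (rule sum_mono2)
    show "{1..<ep_start Sig T (Suc ?K)} \<subseteq> {1..T}" using es_le[of "Suc ?K" Sig T] by auto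
  qed (use g0 in auto)
  also have "\<dots> = \<beta> T * (sqrt 2 * (\<Sum>t\<in>{1..T}. sqrt (xx t)) + c0 * \<beta> T / \<kappa> * (\<Sum>t\<in>{1..T}. xx t))"
    unfolding g_def by (simp add: sum.distrib sum_distrib_left sum_divide_distrib algebra_simps)
  also have "\<dots> \<le> \<beta> T * (sqrt 2 * sqrt (real T * (2 * ?d * ?l)) + c0 * \<beta> T / \<kappa> * (2 * ?d * ?l))"
  proof -
    have S: "(\<Sum>t\<in>{1..T}. xx t) \<le> 2 * ?d * ?l" by (rule xx_sum)
    have "(\<Sum>t\<in>{1..T}. 1 * sqrt (xx t))^2 \<le> (\<Sum>t\<in>{1..T}. 1^2) * (\<Sum>t\<in>{1..T}. (sqrt (xx t))^2)"
      by (rule Cauchy_Schwarz_ineq_sum)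
    also have "(\<Sum>t\<in>{1..T}. (sqrt (xx t))^2) = (\<Sum>t\<in>{1..T}. xx t)"
      by (rule sum.cong) (use xb in auto)
    finally have "(\<Sum>t\<in>{1..T}. sqrt (xx t))^2 \<le> real T * (\<Sum>t\<in>{1..T}. xx t)" by simp
    also have "\<dots> \<le> real T * (2 * ?d * ?l)" by (rule mult_left_mono[OF S]) simp
    finally have "(\<Sum>t\<in>{1..T}. sqrt (xx t)) \<le> sqrt (real T * (2 * ?d * ?l))"
      by (rule real_le_rsqrt)
    then have A: "sqrt 2 * (\<Sum>t\<in>{1..T}. sqrt (xx t)) \<le> sqrt 2 * sqrt (real T * (2 * ?d * ?l))" by simp
    have B: "c0 * \<beta> T / \<kappa> * (\<Sum>t\<in>{1..T}. xx t) \<le> c0 * \<beta> T / \<kappa> * (2 * ?d * ?l)"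
      by (rule mult_left_mono[OF S]) (use k0 bT in \<open>simp add: c0_def less_imp_le\<close>)
    show ?thesis by (rule mult_left_mono[OF add_mono[OF A B]]) (use bT in simp)
  qed
  also have "\<dots> \<le> \<beta> T * ((32 * \<beta> T / \<kappa> + 128 * sqrt 2 * L\<phi> * \<eta> / (\<kappa> * sqrt lam)) * ?d * ?l
                  + 2 * sqrt (?d * real T * ?l))"
  proof (rule mult_left_mono)
    have l0: "0 \<le> ?l"
      using lam_pos by (intro ln_ge_zero) (simp add: add_nonneg_nonneg)
    have d0: "0 \<le> ?d" by simp
    have s1: "sqrt 2 * sqrt (real T * (2 * ?d * ?l)) = 2 * sqrt (?d * real T * ?l)"
    proof -
      have "sqrt 2 * sqrt (real T * (2 * ?d * ?l)) = sqrt (2 * (real T * (2 * ?d * ?l)))"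
        by (simp add: real_sqrt_mult)
      also have "2 * (real T * (2 * ?d * ?l)) = 2^2 * (?d * real T * ?l)" by (simp add: power2_eq_square)
      also have "sqrt (2^2 * (?d * real T * ?l)) = 2 * sqrt (?d * real T * ?l)"
        by (simp add: real_sqrt_mult)
      finally show ?thesis .
    qed
    have c0le: "2 * c0 \<le> 32"
    proof -
      have "sqrt 2 \<le> 2" by (rule real_le_lsqrt) auto
      moreover have "2 * c0 = 8 * sqrt 2 + 16" unfolding c0_def by (simp add: algebra_simps)
      ultimately show ?thesis by simp
    qed
    have "c0 * \<beta> T / \<kappa> * (2 * ?d * ?l) = (2 * c0) * \<beta> T / \<kappa> * ?d * ?l" by simp
    also have "\<dots> \<le> 32 * \<beta> T / \<kappa> * ?d * ?l"
      using c0le k0 bT l0 d0 by (intro mult_right_mono divide_right_mono) (auto simp: less_imp_le)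
    also have "\<dots> \<le> (32 * \<beta> T / \<kappa> + 128 * sqrt 2 * L\<phi> * \<eta> / (\<kappa> * sqrt lam)) * ?d * ?l"
    proof -
      define Y where "Y = 128 * sqrt 2 * L\<phi> * \<eta> / (\<kappa> * sqrt lam)"
      have Y0: "0 \<le> Y" unfolding Y_def
        using Lphi0 eta_pos k0 lam_pos by (simp add: less_imp_le)
      have nn: "0 \<le> Y * ?d * ?l" using Y0 d0 l0 by simp
      have e: "(32 * \<beta> T / \<kappa> + Y) * ?d * ?l = 32 * \<beta> T / \<kappa> * ?d * ?l + Y * ?d * ?l"
        by (simp only: distrib_right)
      show ?thesis using nn e unfolding Y_def by linarith
    qed
    finally have "c0 * \<beta> T / \<kappa> * (2 * ?d * ?l) \<le> (32 * \<beta> T / \<kappa> + 128 * sqrt 2 * L\<phi> * \<eta> / (\<kappa> * sqrt lam)) * ?d * ?l" .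
    then show "sqrt 2 * sqrt (real T * (2 * ?d * ?l)) + c0 * \<beta> T / \<kappa> * (2 * ?d * ?l)
        \<le> (32 * \<beta> T / \<kappa> + 128 * sqrt 2 * L\<phi> * \<eta> / (\<kappa> * sqrt lam)) * ?d * ?l + 2 * sqrt (?d * real T * ?l)"
      using s1 by simp
    show "0 \<le> \<beta> T" using bT by simp
  qed
  finally show ?thesis .
qed

end

theorem lemma19:
  fixes R :: "'s::finite \<Rightarrow> 'a::finite \<Rightarrow> 's set"
    and \<phi> :: "'s \<Rightarrow> 'a \<Rightarrow> 's \<Rightarrow> real^'d::finite"
    and \<theta>star :: "real^'d"
    and L\<phi> L\<theta> \<kappa> lam \<eta> :: real
    and \<beta> :: "nat \<Rightarrow> real"
    and s :: "nat \<Rightarrow> 's" and a :: "nat \<Rightarrow> 'a"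
    and th :: "nat \<Rightarrow> real^'d" and Sig :: "nat \<Rightarrow> real^'d^'d"
    and T :: nat
  assumes A1_phi: "\<forall>x y. \<forall>z\<in>R x y. norm (\<phi> x y z) \<le> L\<phi>"
    and A1_theta: "norm \<theta>star \<le> L\<theta>"
    and A2_kappa: "0 < \<kappa>" "\<kappa> < 1"
    and A2: "\<forall>t\<in>{1..T}. \<forall>\<theta>. norm \<theta> \<le> L\<theta> \<longrightarrow>
               (\<forall>s'\<in>R (s t) (a t). \<forall>s''\<in>R (s t) (a t).
                  \<kappa> \<le> mnl_prob R \<phi> \<theta> (s t) (a t) s' * mnl_prob R \<phi> \<theta> (s t) (a t) s'')"
    and A3: "\<forall>x y. \<exists>z\<in>R x y. \<phi> x y z = 0"
    and traj: "\<forall>t\<in>{1..T}. s (Suc t) \<in> R (s t) (a t)"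
    and eta_pos: "0 < \<eta>"
    and lam_pos: "0 < lam"
    and lam_ge: "L\<phi>\<^sup>2 \<le> lam"
    and init_th: "th 1 = 0"
    and init_Sig: "Sig 1 = mat lam"
    and omd_step: "\<forall>t. 1 \<le> t \<and> t < T \<longrightarrow> norm (th (Suc t)) \<le> L\<theta> \<and>
                    (\<forall>\<theta>. norm \<theta> \<le> L\<theta> \<longrightarrow>
                        omd_obj R \<phi> \<eta> s a th Sig t (th (Suc t)) \<le> omd_obj R \<phi> \<eta> s a th Sig t \<theta>)"
    and Sig_step: "\<forall>t. 1 \<le> t \<and> t < T \<longrightarrow>
                    Sig (Suc t) = Sig t + mnl_hess R \<phi> (th (Suc t)) (s t) (a t)"
    and beta_pos: "\<forall>t. 0 < \<beta> t"
    and beta_mono: "mono \<beta>"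
    and conf: "\<forall>t\<in>{1..T}. wnorm (Sig t) (th t - \<theta>star) \<le> \<beta> t"
  shows "(\<Sum>k = 1..num_episodes Sig T.
           \<Sum>t\<in>{ep_start Sig T k..<ep_start Sig T (Suc k)}.
              bonus1 R \<phi> \<beta> th Sig (ep_start Sig T k) (s t) (a t))
         \<le> \<beta> T * ((32 * \<beta> T / \<kappa> + 128 * sqrt 2 * L\<phi> * \<eta> / (\<kappa> * sqrt lam))
                    * real CARD('d)
                    * ln (1 + real T * real (Max (range (\<lambda>(x, y). card (R x y)))) * L\<phi>\<^sup>2
                              / (lam * real CARD('d)))
                  + 2 * sqrt (real CARD('d) * real T
                    * ln (1 + real T * real (Max (range (\<lambda>(x, y). card (R x y)))) * L\<phi>\<^sup>2
                              / (lam * real CARD('d)))))"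
proof (cases "T = 0")
  case True
  have nle: "\<not> ep_start Sig T k \<le> T" for k using es_ge1[of Sig T k] True by simp
  have emp: "{k. 1 \<le> k \<and> ep_start Sig T k \<le> T} = {}" using nle by blast
  have "num_episodes Sig T = 0" unfolding num_episodes_def emp by (rule card.empty)
  then show ?thesis using True by simp
next
  case False
  then have T1: "1 \<le> T" by simp
  interpret L: L19 R \<phi> \<theta>star L\<phi> L\<theta> \<kappa> lam \<eta> \<beta> s a th Sig T
    by (unfold_locales) (fact A1_phi A1_theta A2_kappa A2 A3 eta_pos lam_pos lam_ge init_th init_Sig omd_step Sig_step beta_pos beta_mono conf T1)+
  show ?thesis by (rule L.main_bound)
qed

end
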